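(* For all $m,n\ge1$, the complete split graph $K_m\vee nK_1$ is determined by its $A_\alpha$-spectrum for every $\alpha\in(1/2,1)$.
   Context: All graphs are finite, simple and undirected. $A_\alpha(G)=\alpha D(G)+(1-\alpha)A(G)$ with $A(G)$ the adjacency and $D(G)$ the degree matrix. A graph is determined by its $A_\alpha$-spectrum if every graph whose $A_\alpha$ matrix has the same multiset of eigenvalues is isomorphic to it. $nK_1$ is the edgeless graph on $n$ vertices, $K_m$ the complete graph, and $\vee$ the join (disjoint union plus all edges between the two vertex sets); $K_m\vee nK_1$ is the complete split graph. *)

theory Defs
  imports "Jordan_Normal_Form.Char_Poly" "HOL-Computational_Algebra.Polynomial"
begin

text \<open>A finite simple graph with vertex set {0..<n} and adjacency relation E
  (symmetric, irreflexive, supported on the vertex set). Every finite simple graph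
  is isomorphic to one of this form.\<close>
definition simple_graph :: "nat \<Rightarrow> (nat \<Rightarrow> nat \<Rightarrow> bool) \<Rightarrow> bool" where
  "simple_graph n E \<longleftrightarrow>
     (\<forall>i j. E i j \<longrightarrow> i < n \<and> j < n) \<and> (\<forall>i j. E i j \<longrightarrow> E j i) \<and> (\<forall>i. \<not> E i i)"

definition degree :: "nat \<Rightarrow> (nat \<Rightarrow> nat \<Rightarrow> bool) \<Rightarrow> nat \<Rightarrow> nat" where
  "degree n E i = card {j. j < n \<and> E i j}"

definition adj_matrix :: "nat \<Rightarrow> (nat \<Rightarrow> nat \<Rightarrow> bool) \<Rightarrow> real mat" where
  "adj_matrix n E = mat n n (\<lambda>(i, j). if E i j then 1 else 0)"

definition deg_matrix :: "nat \<Rightarrow> (nat \<Rightarrow> nat \<Rightarrow> bool) \<Rightarrow> real mat" where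
  "deg_matrix n E = mat n n (\<lambda>(i, j). if i = j then real (degree n E i) else 0)"

definition A_alpha :: "real \<Rightarrow> nat \<Rightarrow> (nat \<Rightarrow> nat \<Rightarrow> bool) \<Rightarrow> real mat" where
  "A_alpha \<alpha> n E = \<alpha> \<cdot>\<^sub>m deg_matrix n E + (1 - \<alpha>) \<cdot>\<^sub>m adj_matrix n E"

definition spectrum_mset :: "real mat \<Rightarrow> complex multiset" where
  "spectrum_mset M = proots (char_poly (map_mat complex_of_real M))"

definition graph_iso :: "nat \<Rightarrow> (nat \<Rightarrow> nat \<Rightarrow> bool) \<Rightarrow> nat \<Rightarrow> (nat \<Rightarrow> nat \<Rightarrow> bool) \<Rightarrow> bool" where
  "graph_iso n E n' E' \<longleftrightarrow> (\<exists>f. bij_betw f {0..<n} {0..<n'} \<and>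
      (\<forall>i<n. \<forall>j<n. E i j \<longleftrightarrow> E' (f i) (f j)))"

definition determined_by_A_alpha_spectrum :: "real \<Rightarrow> nat \<Rightarrow> (nat \<Rightarrow> nat \<Rightarrow> bool) \<Rightarrow> bool" where
  "determined_by_A_alpha_spectrum \<alpha> n E \<longleftrightarrow>
     (\<forall>n' E'. simple_graph n' E' \<longrightarrow>
        spectrum_mset (A_alpha \<alpha> n' E') = spectrum_mset (A_alpha \<alpha> n E) \<longrightarrow>
        graph_iso n' E' n E)"

text \<open>K_m join nK_1: vertices 0..<m form a clique, vertices m..<m+n independent,
  all edges between the two parts.\<close>
definition complete_split :: "nat \<Rightarrow> nat \<Rightarrow> nat \<Rightarrow> nat \<Rightarrow> bool" where
  "complete_split m n i j \<longleftrightarrow> i < m + n \<and> j < m + n \<and> i \<noteq> j \<and> (i < m \<or> j < m)"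

end

theory Submission
  imports Defs "Jordan_Normal_Form.Schur_Decomposition"
begin


definition tr :: "'a::comm_ring_1 mat \<Rightarrow> 'a" where
  "tr A = (\<Sum>i<dim_row A. A $$ (i,i))"

definition lprod :: "'a::comm_ring_1 mat \<Rightarrow> 'a list \<Rightarrow> 'a mat" where
  "lprod A cs = foldr (\<lambda>c B. (A - c \<cdot>\<^sub>m 1\<^sub>m (dim_row A)) * B) cs (1\<^sub>m (dim_row A))"

lemma lprod_Nil[simp]: "lprod A [] = 1\<^sub>m (dim_row A)"
  by (simp add: lprod_def)

lemma lprod_Cons: "lprod A (c # cs) = (A - c \<cdot>\<^sub>m 1\<^sub>m (dim_row A)) * lprod A cs"
  by (simp add: lprod_def)

lemma lprod_carrier[simp]: "A \<in> carrier_mat n n \<Longrightarrow> lprod A cs \<in> carrier_mat n n"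
  by (induct cs) (auto simp: lprod_Cons)

lemma lprod_append: assumes A: "A \<in> carrier_mat n n"
  shows "lprod A (xs @ ys) = lprod A xs * lprod A ys"
proof (induct xs)
  case Nil then show ?case using A by (simp add: left_mult_one_mat[of _ n n])
next
  case (Cons x xs)
  have "lprod A ((x # xs) @ ys) = (A - x \<cdot>\<^sub>m 1\<^sub>m n) * (lprod A xs * lprod A ys)"
    using Cons A by (simp add: lprod_Cons)
  also have "\<dots> = ((A - x \<cdot>\<^sub>m 1\<^sub>m n) * lprod A xs) * lprod A ys"
    using A by (subst assoc_mult_mat[of _ n n _ n _ n]) auto
  finally show ?case using A by (simp add: lprod_Cons)
qed

lemma lprod_sim: assumes wit: "similar_mat_wit A B P Q"
  shows "lprod A cs = P * lprod B cs * Q"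
proof -
  define n where "n = dim_row A"
  from similar_mat_witD[OF n_def wit] have
    PQ: "P * Q = 1\<^sub>m n" and QP: "Q * P = 1\<^sub>m n" and AB: "A = P * B * Q" and
    A: "A \<in> carrier_mat n n" and B: "B \<in> carrier_mat n n" and P: "P \<in> carrier_mat n n" and
    Q: "Q \<in> carrier_mat n n" by auto
  have dB: "dim_row B = n" using B by auto
  show ?thesis
  proof (induct cs)
    case Nil
    then show ?case using P Q PQ dB by (simp add: n_def[symmetric])
  next
    case (Cons c cs)
    define L where "L = lprod B cs"
    have L: "L \<in> carrier_mat n n" using B by (simp add: L_def)
    have "A - c \<cdot>\<^sub>m 1\<^sub>m n = P * (B - c \<cdot>\<^sub>m 1\<^sub>m n) * Q"
    proof -
      have "P * (B - c \<cdot>\<^sub>m 1\<^sub>m n) * Q = (P * B - P * (c \<cdot>\<^sub>m 1\<^sub>m n)) * Q"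
        using P B by (simp add: mult_minus_distrib_mat[of _ n n _ n])
      also have "\<dots> = P * B * Q - P * (c \<cdot>\<^sub>m 1\<^sub>m n) * Q"
        using P B Q by (subst minus_mult_distrib_mat[of _ n n _ _ n]) auto
      also have "P * (c \<cdot>\<^sub>m 1\<^sub>m n) * Q = c \<cdot>\<^sub>m 1\<^sub>m n"
        using P Q PQ by (simp add: mult_smult_distrib[of _ n n _ n] mult_smult_assoc_mat[of _ n n _ n])
      finally show ?thesis using AB by simp
    qed
    then have "lprod A (c # cs) = (P * (B - c \<cdot>\<^sub>m 1\<^sub>m n) * Q) * (P * L * Q)"
      using Cons by (simp add: lprod_Cons n_def L_def)
    also have "\<dots> = P * ((B - c \<cdot>\<^sub>m 1\<^sub>m n) * L) * Q"
    proof -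
      define X where "X = B - c \<cdot>\<^sub>m 1\<^sub>m n"
      have X: "X \<in> carrier_mat n n" using B by (auto simp: X_def)
      have e1: "Q * (P * (L * Q)) = L * Q"
        using P Q L QP by (simp add: assoc_mult_mat[of Q n n P n "L * Q" n, symmetric])
      have "P * X * Q * (P * L * Q) = P * (X * (Q * (P * (L * Q))))"
        using P Q L X by (simp add: assoc_mult_mat[of _ n n _ n _ n])
      also have "\<dots> = P * (X * (L * Q))" by (simp add: e1)
      also have "\<dots> = P * (X * L) * Q"
        using P Q L X by (simp add: assoc_mult_mat[of _ n n _ n _ n])
      finally show ?thesis by (simp add: X_def)
    qed
    finally show ?case by (simp add: lprod_Cons L_def dB)
  qed
qed

lemma tr_mult_comm: assumes A: "A \<in> carrier_mat n k" and B: "B \<in> carrier_mat k n"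
  shows "tr (A * B) = tr (B * A)"
proof -
  have "tr (A * B) = (\<Sum>i<n. \<Sum>j<k. A $$ (i,j) * B $$ (j,i))"
    using A B by (simp add: tr_def scalar_prod_def atLeast0LessThan)
  also have "\<dots> = (\<Sum>j<k. \<Sum>i<n. B $$ (j,i) * A $$ (i,j))"
    by (subst sum.swap) (simp add: mult.commute)
  also have "\<dots> = tr (B * A)"
    using A B by (simp add: tr_def scalar_prod_def atLeast0LessThan)
  finally show ?thesis .
qed

lemma tr_sim: assumes wit: "similar_mat_wit A B P Q"
  and that: "X \<in> carrier_mat (dim_row A) (dim_row A)"
  shows "tr (P * X * Q) = tr X"
proof -
  define n where "n = dim_row A"
  from similar_mat_witD[OF n_def wit] have
    QP: "Q * P = 1\<^sub>m n" and P: "P \<in> carrier_mat n n" and Q: "Q \<in> carrier_mat n n" by auto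
  have X: "X \<in> carrier_mat n n" using that n_def by simp
  have "tr (P * X * Q) = tr (Q * (P * X))"
    using P X Q by (intro tr_mult_comm[of _ n n]) auto
  also have "Q * (P * X) = X" using P Q X QP by (simp add: assoc_mult_mat[of _ n n _ n _ n, symmetric])
  finally show ?thesis .
qed

lemma ut_mult: assumes X: "X \<in> carrier_mat n n" and Y: "Y \<in> carrier_mat n n"
  and uX: "upper_triangular X" and uY: "upper_triangular Y"
  shows "upper_triangular (X * Y)" "\<And>i. i < n \<Longrightarrow> (X * Y) $$ (i,i) = X $$ (i,i) * Y $$ (i,i)"
proof -
  show "upper_triangular (X * Y)"
  proof (rule upper_triangularI)
    fix i j assume ji: "j < i" and i: "i < dim_row (X * Y)"
    have "(X * Y) $$ (i,j) = (\<Sum>k<n. X $$ (i,k) * Y $$ (k,j))"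
      using X Y ji i by (simp add: scalar_prod_def atLeast0LessThan)
    also have "\<dots> = 0"
    proof (rule sum.neutral, intro ballI)
      fix k assume k: "k \<in> {..<n}"
      show "X $$ (i,k) * Y $$ (k,j) = 0"
      proof (cases "k < i")
        case True then show ?thesis using upper_triangularD[OF uX True] X i by auto
      next
        case False then have "j < k" using ji by auto
        then show ?thesis using upper_triangularD[OF uY \<open>j < k\<close>] Y k by auto
      qed
    qed
    finally show "(X * Y) $$ (i,j) = 0" .
  qed
  fix i assume i: "i < n"
  have "(X * Y) $$ (i,i) = (\<Sum>k<n. X $$ (i,k) * Y $$ (k,i))"
    using X Y i by (simp add: scalar_prod_def atLeast0LessThan)
  also have "\<dots> = X $$ (i,i) * Y $$ (i,i) + (\<Sum>k\<in>{..<n} - {i}. X $$ (i,k) * Y $$ (k,i))"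
    using i by (subst sum.remove[of _ i]) auto
  also have "(\<Sum>k\<in>{..<n} - {i}. X $$ (i,k) * Y $$ (k,i)) = 0"
  proof (rule sum.neutral, intro ballI)
    fix k assume k: "k \<in> {..<n} - {i}"
    show "X $$ (i,k) * Y $$ (k,i) = 0"
    proof (cases "k < i")
      case True then show ?thesis using upper_triangularD[OF uX True] X i by auto
    next
      case False then have "i < k" using k by auto
      then show ?thesis using upper_triangularD[OF uY \<open>i < k\<close>] Y k by auto
    qed
  qed
  finally show "(X * Y) $$ (i,i) = X $$ (i,i) * Y $$ (i,i)" by simp
qed

lemma lprod_ut: assumes B: "B \<in> carrier_mat n n" and uB: "upper_triangular B"
  shows "upper_triangular (lprod B cs) \<and> (\<forall>i<n. lprod B cs $$ (i,i) = (\<Prod>c\<leftarrow>cs. B $$ (i,i) - c))"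
proof (induct cs)
  case Nil then show ?case using B by auto
next
  case (Cons c cs)
  have dB: "dim_row B = n" using B by auto
  have F: "B - c \<cdot>\<^sub>m 1\<^sub>m n \<in> carrier_mat n n" using B by auto
  have uF: "upper_triangular (B - c \<cdot>\<^sub>m 1\<^sub>m n)"
    using uB B by (auto intro!: upper_triangularI dest: upper_triangularD)
  have dF: "\<And>i. i < n \<Longrightarrow> (B - c \<cdot>\<^sub>m 1\<^sub>m n) $$ (i,i) = B $$ (i,i) - c" using B by auto
  have L: "lprod B cs \<in> carrier_mat n n" using B by simp
  show ?case using ut_mult[OF F L uF] Cons dF by (simp add: lprod_Cons dB)
qed

lemma tr_lprod_factorized:
  fixes A :: "complex mat"
  assumes A: "A \<in> carrier_mat n n" and c: "char_poly A = (\<Prod>a\<leftarrow>as. [:- a, 1:])"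
  shows "tr (lprod A cs) = (\<Sum>a\<leftarrow>as. \<Prod>c\<leftarrow>cs. a - c)"
proof -
  obtain B P Q where s: "schur_decomposition A as = (B,P,Q)" by (cases "schur_decomposition A as") auto
  from schur_decomposition[OF A c s] have wit: "similar_mat_wit A B P Q"
    and uB: "upper_triangular B" and dg: "diag_mat B = as" by auto
  have dA: "dim_row A = n" using A by auto
  have B: "B \<in> carrier_mat n n" using similar_mat_witD2[OF A wit] by auto
  have "tr (lprod A cs) = tr (lprod B cs)"
    using lprod_sim[OF wit, of cs] tr_sim[OF wit] B dA by simp
  also have "\<dots> = (\<Sum>i<n. \<Prod>c\<leftarrow>cs. B $$ (i,i) - c)"
    using lprod_ut[OF B uB, of cs] B carrier_matD[OF lprod_carrier[OF B, of cs]] by (simp add: tr_def)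
  also have "\<dots> = (\<Sum>a\<leftarrow>diag_mat B. \<Prod>c\<leftarrow>cs. a - c)"
    using B by (simp add: diag_mat_def sum_list_sum_nth atLeast0LessThan)
  finally show ?thesis using dg by simp
qed




lemma proots_linfactors: "proots (\<Prod>a\<leftarrow>as. [:- a, 1:]) = mset (as :: complex list)"
proof -
  have "proots (\<Prod>a\<leftarrow>as. [:- a, 1:]) = (\<Sum>p\<leftarrow>map (\<lambda>a. [:- a, 1:]) as. proots p)"
  proof -
    have "0 \<notin> set (map (\<lambda>a. [:- a, 1:]) as)" by auto
    from proots_prod_list[OF this] show ?thesis by simp
  qed
  also have "\<dots> = (\<Sum>a\<leftarrow>as. {#a#})" by (simp add: o_def)
  also have "\<dots> = mset as" by simp
  finally show ?thesis .
qed

lemma map_lprod: assumes A: "(A :: real mat) \<in> carrier_mat n n"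
  shows "map_mat complex_of_real (lprod A cs) = lprod (map_mat complex_of_real A) (map complex_of_real cs)"
proof (induct cs)
  case Nil then show ?case using A by (auto simp: of_real_hom.mat_hom_one)
next
  case (Cons c cs)
  have F: "A - c \<cdot>\<^sub>m 1\<^sub>m n \<in> carrier_mat n n" using A by auto
  have e: "map_mat complex_of_real (A - c \<cdot>\<^sub>m 1\<^sub>m n) = map_mat complex_of_real A - complex_of_real c \<cdot>\<^sub>m 1\<^sub>m n"
    using A by (intro eq_matI) auto
  have "map_mat complex_of_real (lprod A (c # cs)) = map_mat complex_of_real (A - c \<cdot>\<^sub>m 1\<^sub>m n) * map_mat complex_of_real (lprod A cs)"
    using A by (simp add: lprod_Cons of_real_hom.mat_hom_mult[OF F lprod_carrier[OF A]])
  then show ?case using Cons e A by (simp add: lprod_Cons)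
qed

lemma tr_map: "X \<in> carrier_mat n n \<Longrightarrow> tr (map_mat complex_of_real X) = complex_of_real (tr X)"
  by (simp add: tr_def)

lemma spec_transfer:
  fixes A B :: "real mat"
  assumes A: "A \<in> carrier_mat n n" and B: "B \<in> carrier_mat k k"
    and sp: "spectrum_mset A = spectrum_mset B"
  shows "n = k" "tr (lprod A cs) = tr (lprod B cs)"
proof -
  let ?A = "map_mat complex_of_real A" and ?B = "map_mat complex_of_real B"
  have A': "?A \<in> carrier_mat n n" and B': "?B \<in> carrier_mat k k" using A B by auto
  obtain as where ca: "char_poly ?A = (\<Prod>a\<leftarrow>as. [:- a, 1:])" and la: "length as = n"
    using char_poly_factorized[OF A'] by blast
  obtain bs where cb: "char_poly ?B = (\<Prod>a\<leftarrow>bs. [:- a, 1:])" and lb: "length bs = k"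
    using char_poly_factorized[OF B'] by blast
  have ms: "mset as = mset bs"
    using sp unfolding spectrum_mset_def ca cb proots_linfactors .
  from ms la lb show "n = k" by (metis size_mset)
  have "complex_of_real (tr (lprod A cs)) = tr (lprod ?A (map complex_of_real cs))"
    by (simp add: map_lprod[OF A, symmetric] tr_map[OF lprod_carrier[OF A]])
  also have "\<dots> = (\<Sum>a\<leftarrow>as. \<Prod>c\<leftarrow>map complex_of_real cs. a - c)"
    by (rule tr_lprod_factorized[OF A' ca])
  also have "\<dots> = sum_mset (image_mset (\<lambda>a. \<Prod>c\<leftarrow>map complex_of_real cs. a - c) (mset as))"
    by (simp add: sum_mset_sum_list[symmetric])
  also have "\<dots> = (\<Sum>a\<leftarrow>bs. \<Prod>c\<leftarrow>map complex_of_real cs. a - c)"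
    by (simp add: ms sum_mset_sum_list[symmetric])
  also have "\<dots> = tr (lprod ?B (map complex_of_real cs))"
    by (rule tr_lprod_factorized[OF B' cb, symmetric])
  also have "\<dots> = complex_of_real (tr (lprod B cs))"
    by (simp add: map_lprod[OF B, symmetric] tr_map[OF lprod_carrier[OF B]])
  finally show "tr (lprod A cs) = tr (lprod B cs)" by simp
qed




lemma smult_smult_mat: "a \<cdot>\<^sub>m (b \<cdot>\<^sub>m A) = (a * b :: 'a::semigroup_mult) \<cdot>\<^sub>m A"
  by (intro eq_matI) (auto simp: mult.assoc)

lemma transpose_smult_mat: "transpose_mat (a \<cdot>\<^sub>m A) = a \<cdot>\<^sub>m transpose_mat A"
  by (intro eq_matI) auto

lemma one_smult_mat[simp]: "(1::'a::monoid_mult) \<cdot>\<^sub>m A = A"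
  by (intro eq_matI) auto

lemma zero_smult_mat: "A \<in> carrier_mat n k \<Longrightarrow> (0::'a::mult_zero) \<cdot>\<^sub>m A = 0\<^sub>m n k"
  by (intro eq_matI) auto

lemma lin_comm:
  assumes A: "(A :: 'a::comm_ring_1 mat) \<in> carrier_mat n n"
  shows "(A - a \<cdot>\<^sub>m 1\<^sub>m n) * (A - b \<cdot>\<^sub>m 1\<^sub>m n) = (A - b \<cdot>\<^sub>m 1\<^sub>m n) * (A - a \<cdot>\<^sub>m 1\<^sub>m n)"
proof -
  define X where "X = A - a \<cdot>\<^sub>m 1\<^sub>m n"
  have X: "X \<in> carrier_mat n n" using A by (auto simp: X_def)
  have Y: "A - b \<cdot>\<^sub>m 1\<^sub>m n = X + (a - b) \<cdot>\<^sub>m 1\<^sub>m n"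
    using A by (intro eq_matI) (auto simp: X_def algebra_simps)
  have "X * (X + (a - b) \<cdot>\<^sub>m 1\<^sub>m n) = X * X + (a - b) \<cdot>\<^sub>m X"
    using X by (simp add: mult_add_distrib_mat[of _ n n _ n] mult_smult_distrib[of _ n n _ n])
  moreover have "(X + (a - b) \<cdot>\<^sub>m 1\<^sub>m n) * X = X * X + (a - b) \<cdot>\<^sub>m X"
    using X by (simp add: add_mult_distrib_mat[of _ n n _ _ n] mult_smult_assoc_mat[of _ n n _ n])
  ultimately show ?thesis by (simp add: Y X_def[symmetric])
qed

lemma lprod_remove1:
  assumes A: "(A :: 'a::comm_ring_1 mat) \<in> carrier_mat n n" and x: "x \<in> set xs"
  shows "lprod A xs = (A - x \<cdot>\<^sub>m 1\<^sub>m n) * lprod A (remove1 x xs)"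
  using x
proof (induct xs)
  case Nil then show ?case by simp
next
  case (Cons y xs)
  have dA: "dim_row A = n" using A by auto
  show ?case
  proof (cases "y = x")
    case True then show ?thesis by (simp add: lprod_Cons dA)
  next
    case False
    then have x: "x \<in> set xs" using Cons by auto
    define L where "L = lprod A (remove1 x xs)"
    have L: "L \<in> carrier_mat n n" using A by (simp add: L_def)
    have X: "A - x \<cdot>\<^sub>m 1\<^sub>m n \<in> carrier_mat n n" and Y: "A - y \<cdot>\<^sub>m 1\<^sub>m n \<in> carrier_mat n n"
      using A by auto
    have "lprod A (y # xs) = (A - y \<cdot>\<^sub>m 1\<^sub>m n) * ((A - x \<cdot>\<^sub>m 1\<^sub>m n) * L)"
      using Cons(1)[OF x] by (simp add: lprod_Cons dA L_def)
    also have "\<dots> = ((A - y \<cdot>\<^sub>m 1\<^sub>m n) * (A - x \<cdot>\<^sub>m 1\<^sub>m n)) * L"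
      using X Y L by (simp add: assoc_mult_mat[of _ n n _ n _ n])
    also have "\<dots> = ((A - x \<cdot>\<^sub>m 1\<^sub>m n) * (A - y \<cdot>\<^sub>m 1\<^sub>m n)) * L"
      by (simp add: lin_comm[OF A])
    also have "\<dots> = (A - x \<cdot>\<^sub>m 1\<^sub>m n) * ((A - y \<cdot>\<^sub>m 1\<^sub>m n) * L)"
      using X Y L by (simp add: assoc_mult_mat[of _ n n _ n _ n])
    finally show ?thesis using False by (simp add: lprod_Cons dA L_def)
  qed
qed

lemma lprod_perm:
  assumes A: "(A :: 'a::comm_ring_1 mat) \<in> carrier_mat n n"
  shows "mset xs = mset ys \<Longrightarrow> lprod A xs = lprod A ys"
proof (induct xs arbitrary: ys)
  case Nil then show ?case by simp
next
  case (Cons x xs)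
  have dA: "dim_row A = n" using A by auto
  have x: "x \<in> set ys" using Cons(2) by (metis list.set_intros(1) set_mset_mset)
  have "mset xs = mset (remove1 x ys)" using Cons(2) by (simp add: x) (metis add_mset_remove_trivial)
  then have "lprod A xs = lprod A (remove1 x ys)" by (rule Cons(1))
  then show ?case using lprod_remove1[OF A x] by (simp add: lprod_Cons dA)
qed

lemma lprod_transpose:
  assumes A: "(A :: 'a::comm_ring_1 mat) \<in> carrier_mat n n" and sA: "transpose_mat A = A"
  shows "transpose_mat (lprod A cs) = lprod A cs"
proof -
  have dA: "dim_row A = n" using A by auto
  have "transpose_mat (lprod A cs) = lprod A (rev cs)"
  proof (induct cs)
    case Nil then show ?case by (simp add: dA)
  next
    case (Cons c cs)
    have F: "A - c \<cdot>\<^sub>m 1\<^sub>m n \<in> carrier_mat n n" using A by auto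
    have tF: "transpose_mat (A - c \<cdot>\<^sub>m 1\<^sub>m n) = A - c \<cdot>\<^sub>m 1\<^sub>m n"
      using A sA by (intro eq_matI) (auto simp: mat_eq_iff)
    have "transpose_mat (lprod A (c # cs)) = transpose_mat (lprod A cs) * transpose_mat (A - c \<cdot>\<^sub>m 1\<^sub>m n)"
      by (simp add: lprod_Cons transpose_mult[OF F lprod_carrier[OF A]] dA)
    also have "\<dots> = lprod A (rev cs) * lprod A [c]"
      using F by (simp add: Cons tF lprod_Cons dA)
    also have "\<dots> = lprod A (rev (c # cs))" by (simp add: lprod_append[OF A])
    finally show ?case .
  qed
  also have "\<dots> = lprod A cs" by (rule lprod_perm[OF A]) simp
  finally show ?thesis .
qed

lemma lprod_eigen:
  assumes A: "(A :: 'a::comm_ring_1 mat) \<in> carrier_mat n n" and X: "X \<in> carrier_mat n k"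
    and e: "A * X = \<mu> \<cdot>\<^sub>m X"
  shows "lprod A ds * X = (\<Prod>d\<leftarrow>ds. \<mu> - d) \<cdot>\<^sub>m X"
proof (induct ds)
  case Nil then show ?case using A X by auto
next
  case (Cons d ds)
  have dA: "dim_row A = n" using A by auto
  have F: "A - d \<cdot>\<^sub>m 1\<^sub>m n \<in> carrier_mat n n" using A by auto
  have "lprod A (d # ds) * X = (A - d \<cdot>\<^sub>m 1\<^sub>m n) * (lprod A ds * X)"
    using F A X by (simp add: lprod_Cons dA assoc_mult_mat[of _ n n _ n _ k])
  also have "\<dots> = (\<Prod>d\<leftarrow>ds. \<mu> - d) \<cdot>\<^sub>m ((A - d \<cdot>\<^sub>m 1\<^sub>m n) * X)"
    using F X by (simp add: Cons mult_smult_distrib[of _ n n _ k])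
  also have "(A - d \<cdot>\<^sub>m 1\<^sub>m n) * X = (\<mu> - d) \<cdot>\<^sub>m X"
  proof -
    have "(A - d \<cdot>\<^sub>m 1\<^sub>m n) * X = A * X - (d \<cdot>\<^sub>m 1\<^sub>m n) * X"
      using A X by (simp add: minus_mult_distrib_mat[of _ n n _ _ k])
    also have "\<dots> = (\<mu> - d) \<cdot>\<^sub>m X" using X e
      by (intro eq_matI) (auto simp: algebra_simps)
    finally show ?thesis .
  qed
  finally show ?case using X by (simp add: smult_smult_mat mult.commute)
qed

definition proj :: "'a::field mat \<Rightarrow> 'a list \<Rightarrow> 'a \<Rightarrow> 'a mat" where
  "proj A cs \<mu> = (1 / (\<Prod>d\<leftarrow>remove1 \<mu> cs. \<mu> - d)) \<cdot>\<^sub>m lprod A (remove1 \<mu> cs)"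

locale specsetup =
  fixes A :: "'a::field mat" and n :: nat and cs :: "'a list"
  assumes A: "A \<in> carrier_mat n n" and dist: "distinct cs" and ann: "lprod A cs = 0\<^sub>m n n"
begin

lemma rho_nz: "\<mu> \<in> set cs \<Longrightarrow> (\<Prod>d\<leftarrow>remove1 \<mu> cs. \<mu> - d) \<noteq> 0"
  using dist by (auto simp: prod_list_zero_iff)

lemma proj_carrier[simp]: "proj A cs \<mu> \<in> carrier_mat n n"
  using A by (simp add: proj_def)

lemma proj_eigen: assumes mu: "\<mu> \<in> set cs"
  shows "A * proj A cs \<mu> = \<mu> \<cdot>\<^sub>m proj A cs \<mu>"
proof -
  define L where "L = lprod A (remove1 \<mu> cs)"
  have L: "L \<in> carrier_mat n n" using A by (simp add: L_def)
  have "(A - \<mu> \<cdot>\<^sub>m 1\<^sub>m n) * L = 0\<^sub>m n n"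
    using lprod_remove1[OF A mu] ann by (simp add: L_def)
  then have "A * L - (\<mu> \<cdot>\<^sub>m 1\<^sub>m n) * L = 0\<^sub>m n n"
    using A L by (simp add: minus_mult_distrib_mat[of _ n n _ _ n])
  then have AL: "A * L = \<mu> \<cdot>\<^sub>m L"
    using A L by (auto simp: mat_eq_iff)
  show ?thesis using AL A L
    by (simp add: proj_def L_def[symmetric] mult_smult_distrib[of _ n n _ n] smult_smult_mat mult.commute)
qed

lemma proj_fix: assumes mu: "\<mu> \<in> set cs" and X: "X \<in> carrier_mat n k" and e: "A * X = \<mu> \<cdot>\<^sub>m X"
  shows "proj A cs \<mu> * X = X"
proof -
  have "proj A cs \<mu> * X = (1 / (\<Prod>d\<leftarrow>remove1 \<mu> cs. \<mu> - d)) \<cdot>\<^sub>m (lprod A (remove1 \<mu> cs) * X)"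
    using A X by (simp add: proj_def mult_smult_assoc_mat[of _ n n _ k])
  also have "\<dots> = X" using rho_nz[OF mu] X by (simp add: lprod_eigen[OF A X e] smult_smult_mat)
  finally show ?thesis .
qed

lemma proj_idem: "\<mu> \<in> set cs \<Longrightarrow> proj A cs \<mu> * proj A cs \<mu> = proj A cs \<mu>"
  by (rule proj_fix[OF _ proj_carrier proj_eigen])

lemma proj_orth: assumes mu: "\<mu> \<in> set cs" and nu: "\<nu> \<in> set cs" and ne: "\<nu> \<noteq> \<mu>"
  shows "proj A cs \<nu> * proj A cs \<mu> = 0\<^sub>m n n"
proof -
  have m: "\<mu> \<in> set (remove1 \<nu> cs)" using mu ne by (simp add: in_set_remove1)
  have z: "(\<Prod>d\<leftarrow>remove1 \<nu> cs. \<mu> - d) = 0" using m by (auto simp: prod_list_zero_iff)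
  have "lprod A (remove1 \<nu> cs) * proj A cs \<mu> = 0\<^sub>m n n"
    using lprod_eigen[OF A proj_carrier proj_eigen[OF mu], of "remove1 \<nu> cs"]
    by (simp only: z zero_smult_mat[OF proj_carrier])
  then have "lprod A (remove1 \<nu> cs) * proj A cs \<mu> = 0\<^sub>m n n"
    by simp
  then show ?thesis using A
    by (simp add: proj_def mult_smult_assoc_mat[of _ n n _ n])
qed

lemma proj_sym: assumes sA: "transpose_mat A = A"
  shows "transpose_mat (proj A cs \<mu>) = proj A cs \<mu>"
  using lprod_transpose[OF A sA] by (simp add: proj_def transpose_smult_mat)

end




lemma A_carrier[simp]: "A_alpha a N E \<in> carrier_mat N N"
  by (simp add: A_alpha_def deg_matrix_def adj_matrix_def)

lemma A_dims[simp]: "dim_row (A_alpha a N E) = N" "dim_col (A_alpha a N E) = N"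
  by (simp_all add: A_alpha_def deg_matrix_def adj_matrix_def)

lemma A_entry: "i < N \<Longrightarrow> j < N \<Longrightarrow> A_alpha a N E $$ (i,j) =
   (if i = j then a * real (degree N E i) else 0) + (1 - a) * (if E i j then 1 else 0)"
  by (simp add: A_alpha_def deg_matrix_def adj_matrix_def)

lemma A_sym: "simple_graph N E \<Longrightarrow> transpose_mat (A_alpha a N E) = A_alpha a N E"
  by (intro eq_matI) (auto simp: A_entry simple_graph_def)

lemma card_sum: "real (card {j. j < (N::nat) \<and> P j}) = (\<Sum>j<N. if P j then 1 else 0)"
proof -
  have "{j. j < N \<and> P j} = {j\<in>{..<N}. P j}" by auto
  then have "real (card {j. j < N \<and> P j}) = (\<Sum>j\<in>{j\<in>{..<N}. P j}. 1)" by simp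
  also have "\<dots> = (\<Sum>j<N. if P j then 1 else 0)" by (rule sum.inter_filter) simp
  finally show ?thesis .
qed

lemma deg_sum: "real (degree N E i) = (\<Sum>j<N. if E i j then 1 else 0)"
  unfolding degree_def by (rule card_sum)

definition nb :: "nat \<Rightarrow> (nat \<Rightarrow> nat \<Rightarrow> bool) \<Rightarrow> nat \<Rightarrow> real" where
  "nb N E i = (\<Sum>j<N. if j \<noteq> i \<and> \<not> E i j then 1 else 0)"

lemma split3: assumes "\<not> E i i"
  shows "(x j :: real) = (if j = i then x j else 0) + (if E i j then x j else 0) + (if j \<noteq> i \<and> \<not> E i j then x j else 0)"
  using assms by auto

lemma sum_split3: fixes N :: nat assumes "\<not> E i i" and i: "i < N"
  shows "(\<Sum>j<N. (x j :: real)) = x i + (\<Sum>j<N. if E i j then x j else 0) + (\<Sum>j<N. if j \<noteq> i \<and> \<not> E i j then x j else 0)"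
proof -
  have "(\<Sum>j<N. x j) = (\<Sum>j<N. (if j = i then x j else 0) + (if E i j then x j else 0) + (if j \<noteq> i \<and> \<not> E i j then x j else 0))"
    by (rule sum.cong[OF refl], rule split3, rule assms(1))
  also have "\<dots> = x i + (\<Sum>j<N. if E i j then x j else 0) + (\<Sum>j<N. if j \<noteq> i \<and> \<not> E i j then x j else 0)"
  proof -
    have "(\<Sum>j<N. if j = i then x j else 0) = x i" using i by simp
    then show ?thesis by (simp add: sum.distrib)
  qed
  finally show ?thesis .
qed

lemma nb_eq: assumes "simple_graph N E" "i < N"
  shows "nb N E i = real N - 1 - real (degree N E i)"
  using sum_split3[of E i N "\<lambda>_. 1"] assms by (simp add: nb_def deg_sum simple_graph_def)

lemma deg_le: assumes "simple_graph N E" "i < N"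
  shows "degree N E i \<le> N - 1"
proof -
  have "{j. j < N \<and> E i j} \<subseteq> {..<N} - {i}" using assms by (auto simp: simple_graph_def)
  then have "degree N E i \<le> card ({..<N} - {i})" unfolding degree_def by (intro card_mono) auto
  then show ?thesis using assms by simp
qed

definition domv :: "nat \<Rightarrow> (nat \<Rightarrow> nat \<Rightarrow> bool) \<Rightarrow> nat set" where
  "domv N E = {i. i < N \<and> (\<forall>j<N. j \<noteq> i \<longrightarrow> E i j)}"

lemma dom_deg: assumes "simple_graph N E" "i \<in> domv N E"
  shows "degree N E i = N - 1"
proof -
  have "{j. j < N \<and> E i j} = {..<N} - {i}" using assms by (auto simp: simple_graph_def domv_def)
  then show ?thesis using assms by (simp add: degree_def domv_def)
qed

lemma nondom_nb: assumes g: "simple_graph N E" and i: "i < N" "i \<notin> domv N E"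
  shows "nb N E i \<ge> 1"
proof -
  obtain j where "j < N" "j \<noteq> i" "\<not> E i j" using i by (auto simp: domv_def)
  then have "1 \<le> (if j \<noteq> i \<and> \<not> E i j then 1 else (0::real))" by simp
  also have "\<dots> \<le> nb N E i" unfolding nb_def
    by (rule member_le_sum) (use \<open>j < N\<close> in auto)
  finally show ?thesis .
qed

lemma nb_nonneg: "nb N E i \<ge> 0"
  unfolding nb_def by (rule sum_nonneg) auto

lemma row_sum: assumes g: "simple_graph N E" and i: "i < N"
  shows "(\<Sum>j<N. A_alpha a N E $$ (i,j) * x j) = a * real (degree N E i) * x i + (1 - a) * (\<Sum>j<N. if E i j then x j else 0)"
proof -
  have "(\<Sum>j<N. A_alpha a N E $$ (i,j) * x j) = (\<Sum>j<N. (if j = i then a * real (degree N E i) * x i else 0) + (1 - a) * (if E i j then x j else 0))"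
    using g by (intro sum.cong refl) (auto simp: A_entry i simple_graph_def algebra_simps)
  also have "\<dots> = a * real (degree N E i) * x i + (1 - a) * (\<Sum>j<N. if E i j then x j else 0)"
    using i by (simp add: sum.distrib sum_distrib_left[symmetric])
  finally show ?thesis .
qed

lemma QF:
  assumes g: "simple_graph N E" and a1: "1/2 < a" and a2: "a < 1"
  defines "l \<equiv> a * real N - 1"
  shows "(\<Sum>i<N. x i * (l * x i - (\<Sum>j<N. A_alpha a N E $$ (i,j) * x j))) + (1 - a) * (\<Sum>i<N. x i)^2
      \<ge> (2 * a - 1) * (\<Sum>i<N. nb N E i * (x i)^2)"
proof -
  let ?S = "\<Sum>j<N. x j"
  let ?R = "\<lambda>i. \<Sum>j<N. if j \<noteq> i \<and> \<not> E i j then x j else 0"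
  have irr: "\<And>i. \<not> E i i" using g by (simp add: simple_graph_def)
  have key: "\<And>i. i < N \<Longrightarrow> l * x i - (\<Sum>j<N. A_alpha a N E $$ (i,j) * x j) + (1 - a) * ?S
        = a * nb N E i * x i + (1 - a) * ?R i"
  proof -
    fix i assume i: "i < N"
    have "?S = x i + (\<Sum>j<N. if E i j then x j else 0) + ?R i" by (rule sum_split3[OF irr i])
    then show "l * x i - (\<Sum>j<N. A_alpha a N E $$ (i,j) * x j) + (1 - a) * ?S = a * nb N E i * x i + (1 - a) * ?R i"
      by (subst row_sum[OF g i]) (simp add: nb_eq[OF g i] l_def algebra_simps)
  qed
  have L: "(\<Sum>i<N. x i * (l * x i - (\<Sum>j<N. A_alpha a N E $$ (i,j) * x j))) + (1 - a) * ?S^2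
      = (\<Sum>i<N. x i * (l * x i - (\<Sum>j<N. A_alpha a N E $$ (i,j) * x j) + (1 - a) * ?S))"
  proof -
    have "(\<Sum>i<N. x i * (l * x i - (\<Sum>j<N. A_alpha a N E $$ (i,j) * x j) + (1 - a) * ?S))
       = (\<Sum>i<N. x i * (l * x i - (\<Sum>j<N. A_alpha a N E $$ (i,j) * x j)) + x i * ((1 - a) * ?S))"
      by (simp add: distrib_left)
    also have "\<dots> = (\<Sum>i<N. x i * (l * x i - (\<Sum>j<N. A_alpha a N E $$ (i,j) * x j))) + (\<Sum>i<N. x i * ((1 - a) * ?S))"
      by (rule sum.distrib)
    also have "(\<Sum>i<N. x i * ((1 - a) * ?S)) = (1 - a) * ?S^2"
      by (simp add: sum_distrib_right[symmetric] power2_eq_square)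
    finally show ?thesis by simp
  qed
  also have "\<dots> = (\<Sum>i<N. a * nb N E i * (x i)^2 + (1 - a) * (x i * ?R i))"
  proof (rule sum.cong[OF refl])
    fix i assume "i \<in> {..<N}"
    then have i: "i < N" by simp
    have "x i * (l * x i - (\<Sum>j<N. A_alpha a N E $$ (i,j) * x j) + (1 - a) * ?S) = x i * (a * nb N E i * x i + (1 - a) * ?R i)"
      by (simp only: key[OF i])
    then show "x i * (l * x i - (\<Sum>j<N. A_alpha a N E $$ (i,j) * x j) + (1 - a) * ?S) = a * nb N E i * (x i)^2 + (1 - a) * (x i * ?R i)"
      by (simp add: power2_eq_square algebra_simps)
  qed
  finally have L: "(\<Sum>i<N. x i * (l * x i - (\<Sum>j<N. A_alpha a N E $$ (i,j) * x j))) + (1 - a) * ?S^2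
      = a * (\<Sum>i<N. nb N E i * (x i)^2) + (1 - a) * (\<Sum>i<N. x i * ?R i)"
    by (simp add: sum.distrib sum_distrib_left mult.assoc)
  define Z where "Z = (\<Sum>i<N. \<Sum>j<N. if j \<noteq> i \<and> \<not> E i j then (x i + x j)^2 else 0)"
  have Z0: "Z \<ge> 0" unfolding Z_def by (intro sum_nonneg) auto
  have sym: "\<And>i j. (j \<noteq> i \<and> \<not> E i j) = (i \<noteq> j \<and> \<not> E j i)"
    using g by (auto simp: simple_graph_def)
  have Z1: "(\<Sum>i<N. \<Sum>j<N. if j \<noteq> i \<and> \<not> E i j then (x i)^2 else 0) = (\<Sum>i<N. nb N E i * (x i)^2)"
  proof (rule sum.cong[OF refl])
    fix i
    show "(\<Sum>j<N. if j \<noteq> i \<and> \<not> E i j then (x i)^2 else 0) = nb N E i * (x i)^2"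
      unfolding nb_def sum_distrib_right by (rule sum.cong) auto
  qed
  have Z2: "(\<Sum>i<N. \<Sum>j<N. if j \<noteq> i \<and> \<not> E i j then (x j)^2 else 0) = (\<Sum>i<N. nb N E i * (x i)^2)"
  proof -
    have "(\<Sum>i<N. \<Sum>j<N. if j \<noteq> i \<and> \<not> E i j then (x j)^2 else 0) = (\<Sum>j<N. \<Sum>i<N. if j \<noteq> i \<and> \<not> E i j then (x j)^2 else 0)"
      by (rule sum.swap)
    also have "\<dots> = (\<Sum>j<N. \<Sum>i<N. if i \<noteq> j \<and> \<not> E j i then (x j)^2 else 0)"
      by (simp only: sym)
    also have "\<dots> = (\<Sum>i<N. nb N E i * (x i)^2)"
      using Z1 by simp
    finally show ?thesis .
  qed
  have Z3: "(\<Sum>i<N. \<Sum>j<N. if j \<noteq> i \<and> \<not> E i j then x i * x j else 0) = (\<Sum>i<N. x i * ?R i)"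
    by (rule sum.cong[OF refl]) (simp add: sum_distrib_left if_distrib cong: if_cong)
  have "Z = (\<Sum>i<N. \<Sum>j<N. (if j \<noteq> i \<and> \<not> E i j then (x i)^2 else 0) + (if j \<noteq> i \<and> \<not> E i j then (x j)^2 else 0)
            + 2 * (if j \<noteq> i \<and> \<not> E i j then x i * x j else 0))"
    unfolding Z_def by (intro sum.cong refl) (auto simp: power2_eq_square algebra_simps)
  also have "\<dots> = 2 * (\<Sum>i<N. nb N E i * (x i)^2) + 2 * (\<Sum>i<N. x i * ?R i)"
    by (simp add: sum.distrib sum_distrib_left[symmetric] Z1 Z2 Z3)
  finally have "(\<Sum>i<N. x i * ?R i) \<ge> - (\<Sum>i<N. nb N E i * (x i)^2)" using Z0 by linarith
  then have "(1 - a) * (\<Sum>i<N. x i * ?R i) \<ge> (1 - a) * (- (\<Sum>i<N. nb N E i * (x i)^2))"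
    using a2 by (intro mult_left_mono) auto
  then show ?thesis unfolding L by (simp add: algebra_simps)
qed




lemma KER:
  assumes g: "simple_graph N E" and a1: "1/2 < a" and a2: "a < 1" and u: "u \<in> domv N E"
    and ev: "\<And>i. i < N \<Longrightarrow> (\<Sum>j<N. A_alpha a N E $$ (i,j) * x j) = (a * real N - 1) * x i"
  shows "(\<Sum>i<N. x i) = 0" "\<And>i. i < N \<Longrightarrow> i \<notin> domv N E \<Longrightarrow> x i = 0"
proof -
  have uN: "u < N" using u by (simp add: domv_def)
  have irr: "\<not> E u u" using g by (simp add: simple_graph_def)
  have R0: "(\<Sum>j<N. if j \<noteq> u \<and> \<not> E u j then x j else 0) = 0"
    using u by (intro sum.neutral) (auto simp: domv_def)
  have S: "(\<Sum>j<N. x j) = x u + (\<Sum>j<N. if E u j then x j else 0)"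
    using sum_split3[of E u N x, OF irr uN] R0 by simp
  have "(a * real N - 1) * x u = a * real (N - 1) * x u + (1 - a) * (\<Sum>j<N. if E u j then x j else 0)"
    using ev[OF uN] row_sum[OF g uN, of a x] dom_deg[OF g u] by simp
  then have "(1 - a) * (\<Sum>j<N. x j) = 0" using S uN by (simp add: of_nat_diff algebra_simps)
  then show S0: "(\<Sum>i<N. x i) = 0" using a2 by simp
  have Q: "(\<Sum>i<N. x i * ((a * real N - 1) * x i - (\<Sum>j<N. A_alpha a N E $$ (i,j) * x j))) = 0"
    by (intro sum.neutral) (simp add: ev)
  have "(2 * a - 1) * (\<Sum>i<N. nb N E i * (x i)^2) \<le> 0"
    using QF[OF g a1 a2, of x] Q S0 by simp
  then have le: "(\<Sum>i<N. nb N E i * (x i)^2) \<le> 0" using a1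
    by (simp add: mult_le_0_iff)
  have nn: "\<And>i. nb N E i * (x i)^2 \<ge> 0" using nb_nonneg by simp
  have z: "\<forall>i\<in>{..<N}. nb N E i * (x i)^2 = 0"
    using le nn sum_nonneg_eq_0_iff[of "{..<N}" "\<lambda>i. nb N E i * (x i)^2"]
    by (meson antisym finite_lessThan sum_nonneg)
  fix i assume i: "i < N" "i \<notin> domv N E"
  have "nb N E i \<ge> 1" by (rule nondom_nb[OF g i])
  moreover have "nb N E i * (x i)^2 = 0" using z i by simp
  ultimately show "x i = 0" by simp
qed

lemma R1:
  fixes F :: "real mat"
  assumes sym: "\<And>i j. i < N \<Longrightarrow> j < N \<Longrightarrow> F $$ (i,j) = F $$ (j,i)"
    and idem: "\<And>i k. i < N \<Longrightarrow> k < N \<Longrightarrow> (\<Sum>j<N. F $$ (i,j) * F $$ (j,k)) = F $$ (i,k)"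
    and cone: "\<And>y. (\<And>i. i < N \<Longrightarrow> (\<Sum>j<N. F $$ (i,j) * y j) = y i) \<Longrightarrow> (\<Sum>i<N. y i) = 0 \<Longrightarrow> (\<forall>i<N. y i = 0)"
  shows "(\<Sum>i<N. F $$ (i,i)) \<le> 1"
proof -
  define s where "s k = (\<Sum>i<N. F $$ (i,k))" for k
  show ?thesis
  proof (cases "\<forall>k<N. s k = 0")
    case True
    have "\<And>k i. k < N \<Longrightarrow> i < N \<Longrightarrow> F $$ (i,k) = 0"
    proof -
      fix k i assume k: "k < N" and i: "i < N"
      have "\<forall>i<N. F $$ (i,k) = 0"
        by (rule cone[of "\<lambda>i. F $$ (i,k)"]) (use idem k True s_def in auto)
      then show "F $$ (i,k) = 0" using i by simp
    qed
    then have "(\<Sum>i<N. F $$ (i,i)) = 0" by simp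
    then show ?thesis by simp
  next
    case False
    then obtain k0 where k0: "k0 < N" and s0: "s k0 \<noteq> 0" by auto
    define t where "t k = s k / s k0" for k
    have col: "\<And>i k. i < N \<Longrightarrow> k < N \<Longrightarrow> F $$ (i,k) = t k * F $$ (i,k0)"
    proof -
      fix i k assume i: "i < N" and k: "k < N"
      let ?y = "\<lambda>i. F $$ (i,k) - t k * F $$ (i,k0)"
      have fix1: "\<And>i. i < N \<Longrightarrow> (\<Sum>j<N. F $$ (i,j) * ?y j) = ?y i"
      proof -
        fix i assume i: "i < N"
        have "(\<Sum>j<N. F $$ (i,j) * ?y j) = (\<Sum>j<N. F $$ (i,j) * F $$ (j,k)) - t k * (\<Sum>j<N. F $$ (i,j) * F $$ (j,k0))"
          by (simp add: right_diff_distrib sum_subtractf sum_distrib_left algebra_simps)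
        then show "(\<Sum>j<N. F $$ (i,j) * ?y j) = ?y i" using idem[OF i k] idem[OF i k0] by simp
      qed
      have "(\<Sum>i<N. ?y i) = s k - t k * s k0"
        by (simp add: sum_subtractf sum_distrib_left s_def)
      then have sum0: "(\<Sum>i<N. ?y i) = 0"
        using s0 by (simp add: t_def)
      have "\<forall>i<N. ?y i = 0" by (rule cone[OF fix1 sum0])
      then show "F $$ (i,k) = t k * F $$ (i,k0)" using i by simp
    qed
    define w where "w i = F $$ (i,k0)" for i
    have t0: "t k0 = 1" using s0 by (simp add: t_def)
    have wk: "\<And>k. k < N \<Longrightarrow> w k = t k * w k0"
      using col[OF k0] sym[OF k0] by (simp add: w_def)
    have diag: "\<And>k. k < N \<Longrightarrow> F $$ (k,k) = (t k)^2 * w k0"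
      using col wk by (simp add: w_def power2_eq_square)
    define T where "T = (\<Sum>k<N. (t k)^2)"
    have trF: "(\<Sum>i<N. F $$ (i,i)) = w k0 * T"
      by (simp add: diag T_def sum_distrib_left mult.commute)
    have "(\<Sum>j<N. F $$ (k0,j) * F $$ (j,k0)) = (\<Sum>j<N. (t j)^2 * (w k0)^2)"
    proof (rule sum.cong[OF refl])
      fix j assume "j \<in> {..<N}"
      then have j: "j < N" by simp
      have "F $$ (k0,j) = w j" using sym[OF k0 j] by (simp add: w_def)
      then show "F $$ (k0,j) * F $$ (j,k0) = (t j)^2 * (w k0)^2"
        using wk[OF j] by (simp add: w_def power2_eq_square)
    qed
    then have "(w k0)^2 * T = w k0"
      using idem[OF k0 k0] by (simp add: T_def sum_distrib_left w_def mult.commute)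
    then have "w k0 = 0 \<or> w k0 * T = 1"
      by (metis mult.assoc mult_cancel_left1 power2_eq_square)
    then show ?thesis using trF by auto
  qed
qed

lemma TRD:
  fixes X :: "real mat"
  assumes g: "simple_graph N E" and a1: "1/2 < a" and a2: "a < 1" and ne: "domv N E \<noteq> {}"
    and sym: "\<And>i j. i < N \<Longrightarrow> j < N \<Longrightarrow> X $$ (i,j) = X $$ (j,i)"
    and cols: "\<And>i k. i < N \<Longrightarrow> k < N \<Longrightarrow> (\<Sum>j<N. A_alpha a N E $$ (i,j) * X $$ (j,k)) = (a * real N - 1) * X $$ (i,k)"
    and fx: "\<And>p q i. p \<in> domv N E \<Longrightarrow> q \<in> domv N E \<Longrightarrow> p \<noteq> q \<Longrightarrow> i < N \<Longrightarrow>
              X $$ (i,p) - X $$ (i,q) = (if i = p then 1 else 0) - (if i = q then 1 else 0)"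
  shows "(\<Sum>i<N. X $$ (i,i)) = real (card (domv N E)) - 1"
proof -
  obtain u where u: "u \<in> domv N E" using ne by auto
  let ?D = "domv N E"
  have Dsub: "?D \<subseteq> {..<N}" by (auto simp: domv_def)
  have fin: "finite ?D" using Dsub finite_subset by blast
  have csum: "\<And>k. k < N \<Longrightarrow> (\<Sum>i<N. X $$ (i,k)) = 0"
    by (rule KER(1)[OF g a1 a2 u]) (rule cols)
  have csupp: "\<And>k i. k < N \<Longrightarrow> i < N \<Longrightarrow> i \<notin> ?D \<Longrightarrow> X $$ (i,k) = 0"
    by (rule KER(2)[OF g a1 a2 u]) (rule cols, auto)
  let ?c = "real (card ?D)"
  have c0: "?c > 0" using ne fin by (simp add: card_gt_0_iff)
  have dA: "\<And>p. p \<in> ?D \<Longrightarrow> ?c * X $$ (p,p) = ?c - 1"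
  proof -
    fix p assume p: "p \<in> ?D"
    have pN: "p < N" using p by (simp add: domv_def)
    have "(\<Sum>q\<in>?D. X $$ (p,p) - X $$ (p,q)) = (\<Sum>q\<in>?D. if q = p then 0 else 1)"
      using fx[OF p _ _ pN] by (intro sum.cong refl) auto
    also have "\<dots> = (\<Sum>q\<in>?D - {p}. 1)"
      using fin p by (simp add: sum.If_cases Diff_eq Int_commute)
    also have "\<dots> = ?c - 1"
    proof -
      have "card ?D \<ge> 1" using fin p by (metis One_nat_def Suc_leI card_gt_0_iff empty_iff)
      then show ?thesis using fin p by (simp add: of_nat_diff)
    qed
    finally have e1: "(\<Sum>q\<in>?D. X $$ (p,p) - X $$ (p,q)) = ?c - 1" .
    have "(\<Sum>q\<in>?D. X $$ (p,q)) = (\<Sum>q\<in>?D. X $$ (q,p))"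
      using Dsub pN by (intro sum.cong refl) (auto intro: sym)
    also have "\<dots> = (\<Sum>q<N. X $$ (q,p))"
      using Dsub csupp[OF pN] by (intro sum.mono_neutral_left) auto
    also have "\<dots> = 0" by (rule csum[OF pN])
    finally have e2: "(\<Sum>q\<in>?D. X $$ (p,q)) = 0" .
    show "?c * X $$ (p,p) = ?c - 1"
      using e1 e2 by (simp add: sum_subtractf)
  qed
  have "(\<Sum>i<N. X $$ (i,i)) = (\<Sum>i\<in>?D. X $$ (i,i))"
    using Dsub csupp by (intro sum.mono_neutral_right) auto
  also have "\<dots> = (\<Sum>i\<in>?D. (?c - 1) / ?c)"
    using dA c0 by (intro sum.cong refl) (simp add: field_simps)
  also have "\<dots> = ?c - 1" using c0 by simp
  finally show ?thesis .
qed




definition smat :: "nat \<Rightarrow> nat \<Rightarrow> real \<Rightarrow> real \<Rightarrow> real \<Rightarrow> real \<Rightarrow> real \<Rightarrow> real \<Rightarrow> real mat" where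
  "smat m n a b c d e f = mat (m+n) (m+n) (\<lambda>(i,j). if i < m then (if j < m then (if i = j then a else b) else c)
       else (if j < m then d else (if i = j then e else f)))"

lemma smat_carrier[simp]: "smat m n a b c d e f \<in> carrier_mat (m+n) (m+n)"
  by (simp add: smat_def)

lemma smat_dims[simp]: "dim_row (smat m n a b c d e f) = m + n" "dim_col (smat m n a b c d e f) = m + n"
  by (simp_all add: smat_def)

lemma smat_index: "i < m + n \<Longrightarrow> j < m + n \<Longrightarrow> smat m n a b c d e f $$ (i,j) =
  (if i < m then (if j < m then (if i = j then a else b) else c) else (if j < m then d else (if i = j then e else f)))"
  by (simp add: smat_def)

lemma sum_one_sp: assumes "finite S" "i \<in> S"
  shows "(\<Sum>k\<in>S. if k = i then x else y) = x + (real (card S) - 1) * (y::real)"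
proof -
  have "(\<Sum>k\<in>S. if k = i then x else y) = x + (\<Sum>k\<in>S - {i}. y)"
    using assms by (subst sum.remove[of S i]) auto
  also have "\<dots> = x + (real (card S) - 1) * y"
  proof -
    have "card S \<ge> 1" using assms by (metis One_nat_def Suc_leI card_gt_0_iff empty_iff)
    then show ?thesis using assms by (simp add: of_nat_diff)
  qed
  finally show ?thesis .
qed

lemma sum_two_sp: assumes "finite S" "i \<in> S" "j \<in> S" "i \<noteq> j"
  shows "(\<Sum>k\<in>S. if k = i then x else if k = j then z else y) = x + z + (real (card S) - 2) * (y::real)"
proof -
  have "(\<Sum>k\<in>S. if k = i then x else if k = j then z else y) = x + (\<Sum>k\<in>S - {i}. if k = j then z else y)"
    using assms by (subst sum.remove[of S i]) auto
  also have "(\<Sum>k\<in>S - {i}. if k = j then z else y) = z + (real (card (S - {i})) - 1) * y"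
    using assms by (intro sum_one_sp) auto
  also have "real (card (S - {i})) = real (card S) - 1"
  proof -
    have "card S \<ge> 1" using assms by (metis One_nat_def Suc_leI card_gt_0_iff empty_iff)
    then show ?thesis using assms by (simp add: of_nat_diff)
  qed
  finally show ?thesis by (simp add: algebra_simps)
qed

lemma sum_const_sp: "(\<Sum>k\<in>S. (y::real)) = real (card S) * y"
  by simp

lemma split_range: fixes m n :: nat shows "(\<Sum>k<m+n. g k) = (\<Sum>k<m. g k) + (\<Sum>k\<in>{m..<m+n}. (g k :: real))"
proof -
  have "{..<m+n} = {..<m} \<union> {m..<m+n}" by auto
  then show ?thesis by (simp add: sum.union_disjoint[of "{..<m}" "{m..<m+n}"] ivl_disj_int)
qed

lemma smat_mult:
  "smat m n a1 b1 c1 d1 e1 f1 * smat m n a2 b2 c2 d2 e2 f2 =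
   smat m n (a1*a2 + (real m - 1)*b1*b2 + real n*c1*d2)
            (a1*b2 + b1*a2 + (real m - 2)*b1*b2 + real n*c1*d2)
            ((a1 + (real m - 1)*b1)*c2 + c1*(e2 + (real n - 1)*f2))
            (d1*(a2 + (real m - 1)*b2) + (e1 + (real n - 1)*f1)*d2)
            (real m*d1*c2 + e1*e2 + (real n - 1)*f1*f2)
            (real m*d1*c2 + e1*f2 + f1*e2 + (real n - 2)*f1*f2)"
  (is "?L = ?R")
proof (rule eq_matI)
  fix i j assume i: "i < dim_row ?R" and j: "j < dim_col ?R"
  then have i: "i < m + n" and j: "j < m + n" by auto
  let ?A = "smat m n a1 b1 c1 d1 e1 f1" and ?B = "smat m n a2 b2 c2 d2 e2 f2"
  have "?L $$ (i,j) = (\<Sum>k<m+n. ?A $$ (i,k) * ?B $$ (k,j))"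
    using i j by (simp add: scalar_prod_def atLeast0LessThan)
  also have "\<dots> = (\<Sum>k<m. ?A $$ (i,k) * ?B $$ (k,j)) + (\<Sum>k\<in>{m..<m+n}. ?A $$ (i,k) * ?B $$ (k,j))"
    by (rule split_range)
  finally have L: "?L $$ (i,j) = (\<Sum>k<m. ?A $$ (i,k) * ?B $$ (k,j)) + (\<Sum>k\<in>{m..<m+n}. ?A $$ (i,k) * ?B $$ (k,j))" .
  have cm: "card {..<m} = m" and cn: "card {m..<m+n} = n" by auto
  show "?L $$ (i,j) = ?R $$ (i,j)"
  proof (cases "i < m")
    case iC: True
    show ?thesis
    proof (cases "j < m")
      case jC: True
      have "(\<Sum>k\<in>{m..<m+n}. ?A $$ (i,k) * ?B $$ (k,j)) = (\<Sum>k\<in>{m..<m+n}. c1 * d2)"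
        using iC jC by (intro sum.cong refl) (auto simp: smat_index)
      then have s2: "(\<Sum>k\<in>{m..<m+n}. ?A $$ (i,k) * ?B $$ (k,j)) = real n * (c1 * d2)" by simp
      show ?thesis
      proof (cases "i = j")
        case True
        have "(\<Sum>k<m. ?A $$ (i,k) * ?B $$ (k,j)) = (\<Sum>k<m. if k = i then a1*a2 else b1*b2)"
          using iC jC True by (intro sum.cong refl) (auto simp: smat_index)
        also have "\<dots> = a1*a2 + (real m - 1) * (b1*b2)" using iC by (subst sum_one_sp) auto
        finally show ?thesis using L s2 iC jC True i j by (simp add: smat_index algebra_simps)
      next
        case False
        have "(\<Sum>k<m. ?A $$ (i,k) * ?B $$ (k,j)) = (\<Sum>k<m. if k = i then a1*b2 else if k = j then b1*a2 else b1*b2)"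
          using iC jC False by (intro sum.cong refl) (auto simp: smat_index)
        also have "\<dots> = a1*b2 + b1*a2 + (real m - 2) * (b1*b2)" using iC jC False by (subst sum_two_sp) auto
        finally show ?thesis using L s2 iC jC False i j by (simp add: smat_index algebra_simps)
      qed
    next
      case jI: False
      have s1: "(\<Sum>k<m. ?A $$ (i,k) * ?B $$ (k,j)) = (\<Sum>k<m. if k = i then a1*c2 else b1*c2)"
        using iC jI j by (intro sum.cong refl) (auto simp: smat_index)
      also have "\<dots> = a1*c2 + (real m - 1) * (b1*c2)" using iC by (subst sum_one_sp) auto
      finally have s1: "(\<Sum>k<m. ?A $$ (i,k) * ?B $$ (k,j)) = a1*c2 + (real m - 1) * (b1*c2)" .
      have "(\<Sum>k\<in>{m..<m+n}. ?A $$ (i,k) * ?B $$ (k,j)) = (\<Sum>k\<in>{m..<m+n}. if k = j then c1*e2 else c1*f2)"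
        using iC jI j by (intro sum.cong refl) (auto simp: smat_index)
      also have "\<dots> = c1*e2 + (real n - 1) * (c1*f2)" using jI j by (subst sum_one_sp) auto
      finally show ?thesis using L s1 iC jI i j by (simp add: smat_index algebra_simps)
    qed
  next
    case iI: False
    show ?thesis
    proof (cases "j < m")
      case jC: True
      have s1: "(\<Sum>k<m. ?A $$ (i,k) * ?B $$ (k,j)) = (\<Sum>k<m. if k = j then d1*a2 else d1*b2)"
        using iI jC i by (intro sum.cong refl) (auto simp: smat_index)
      also have "\<dots> = d1*a2 + (real m - 1) * (d1*b2)" using jC by (subst sum_one_sp) auto
      finally have s1: "(\<Sum>k<m. ?A $$ (i,k) * ?B $$ (k,j)) = d1*a2 + (real m - 1) * (d1*b2)" .
      have "(\<Sum>k\<in>{m..<m+n}. ?A $$ (i,k) * ?B $$ (k,j)) = (\<Sum>k\<in>{m..<m+n}. if k = i then e1*d2 else f1*d2)"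
        using iI jC i by (intro sum.cong refl) (auto simp: smat_index)
      also have "\<dots> = e1*d2 + (real n - 1) * (f1*d2)" using iI i by (subst sum_one_sp) auto
      finally show ?thesis using L s1 iI jC i j by (simp add: smat_index algebra_simps)
    next
      case jI: False
      have "(\<Sum>k<m. ?A $$ (i,k) * ?B $$ (k,j)) = (\<Sum>k<m. d1 * c2)"
        using iI jI i j by (intro sum.cong refl) (auto simp: smat_index)
      then have s1: "(\<Sum>k<m. ?A $$ (i,k) * ?B $$ (k,j)) = real m * (d1 * c2)" by simp
      show ?thesis
      proof (cases "i = j")
        case True
        have "(\<Sum>k\<in>{m..<m+n}. ?A $$ (i,k) * ?B $$ (k,j)) = (\<Sum>k\<in>{m..<m+n}. if k = i then e1*e2 else f1*f2)"
          using iI jI True i by (intro sum.cong refl) (auto simp: smat_index)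
        also have "\<dots> = e1*e2 + (real n - 1) * (f1*f2)" using iI i by (subst sum_one_sp) auto
        finally show ?thesis using L s1 iI jI True i j by (simp add: smat_index algebra_simps)
      next
        case False
        have "(\<Sum>k\<in>{m..<m+n}. ?A $$ (i,k) * ?B $$ (k,j)) = (\<Sum>k\<in>{m..<m+n}. if k = i then e1*f2 else if k = j then f1*e2 else f1*f2)"
          using iI jI False i j by (intro sum.cong refl) (auto simp: smat_index)
        also have "\<dots> = e1*f2 + f1*e2 + (real n - 2) * (f1*f2)" using iI jI False i j by (subst sum_two_sp) auto
        finally show ?thesis using L s1 iI jI False i j by (simp add: smat_index algebra_simps)
      qed
    qed
  qed
qed auto




lemma cs_graph: "simple_graph (m+n) (complete_split m n)"
  by (auto simp: simple_graph_def complete_split_def)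

lemma cs_deg_C: assumes "i < m" shows "degree (m+n) (complete_split m n) i = m + n - 1"
proof -
  have "{j. j < m+n \<and> complete_split m n i j} = {..<m+n} - {i}"
    using assms by (auto simp: complete_split_def)
  then show ?thesis using assms by (simp add: degree_def)
qed

lemma cs_deg_I: assumes "m \<le> i" "i < m + n" shows "degree (m+n) (complete_split m n) i = m"
proof -
  have "{j. j < m+n \<and> complete_split m n i j} = {..<m}"
    using assms by (auto simp: complete_split_def)
  then show ?thesis by (simp add: degree_def)
qed

lemma cs_mat: assumes m: "1 \<le> m"
  shows "A_alpha a (m+n) (complete_split m n) = smat m n (a * (real m + real n - 1)) (1 - a) (1 - a) (1 - a) (a * real m) 0"
proof (rule eq_matI)
  fix i j assume "i < dim_row (smat m n (a * (real m + real n - 1)) (1 - a) (1 - a) (1 - a) (a * real m) 0)"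
    "j < dim_col (smat m n (a * (real m + real n - 1)) (1 - a) (1 - a) (1 - a) (a * real m) 0)"
  then have i: "i < m + n" and j: "j < m + n" by auto
  show "A_alpha a (m+n) (complete_split m n) $$ (i,j) = smat m n (a * (real m + real n - 1)) (1 - a) (1 - a) (1 - a) (a * real m) 0 $$ (i,j)"
    using i j m by (auto simp: A_entry smat_index cs_deg_C cs_deg_I complete_split_def of_nat_diff)
qed auto

lemma one_smat: "1\<^sub>m (m+n) = smat m n 1 0 0 0 1 0"
  by (intro eq_matI) (auto simp: smat_index)

lemma smat_minus: "smat m n a b c d e f - x \<cdot>\<^sub>m 1\<^sub>m (m+n) = smat m n (a - x) b c d (e - x) f"
  by (intro eq_matI) (auto simp: smat_index)

lemma smat_smult: "x \<cdot>\<^sub>m smat m n a b c d e f = smat m n (x*a) (x*b) (x*c) (x*d) (x*e) (x*f)"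
  by (intro eq_matI) (auto simp: smat_index)

lemma smat_zero: "smat m n 0 0 0 0 0 0 = 0\<^sub>m (m+n) (m+n)"
  by (intro eq_matI) (auto simp: smat_index)

lemma smat_eqI: "a = a' \<Longrightarrow> b = b' \<Longrightarrow> c = c' \<Longrightarrow> d = d' \<Longrightarrow> e = e' \<Longrightarrow> f = f' \<Longrightarrow>
  smat m n a b c d e f = smat m n a' b' c' d' e' f'" by simp

lemma cs_dom: assumes "2 \<le> n" shows "domv (m+n) (complete_split m n) = {..<m}"
proof
  show "{..<m} \<subseteq> domv (m+n) (complete_split m n)"
    by (auto simp: domv_def complete_split_def)
  show "domv (m+n) (complete_split m n) \<subseteq> {..<m}"
  proof
    fix i assume i: "i \<in> domv (m+n) (complete_split m n)"
    show "i \<in> {..<m}"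
    proof (rule ccontr)
      assume "i \<notin> {..<m}"
      then have im: "m \<le> i" by simp
      have iN: "i < m + n" using i by (simp add: domv_def)
      define j where "j = (if i = m then m + 1 else m)"
      have "j < m + n" "j \<noteq> i" "\<not> complete_split m n i j"
        using assms im iN by (auto simp: j_def complete_split_def)
      then show False using i by (auto simp: domv_def)
    qed
  qed
qed




locale cs =
  fixes m n :: nat and a :: real
  assumes m1: "1 \<le> m" and n2: "2 \<le> n" and a1: "1/2 < a" and a2: "a < 1"
begin

definition "Nr = real m + real n"
definition "l0 = a * Nr - 1"
definition "Q11 = a * (Nr - 1) + (1 - a) * (real m - 1)"
definition "Q12 = (1 - a) * real n"
definition "Q21 = (1 - a) * real m"
definition "Q22 = a * real m"
definition "T = Q11 + Q22"
definition "D = Q11 * Q22 - Q12 * Q21"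
definition "th1 = (T + sqrt (T^2 - 4 * D)) / 2"
definition "th2 = (T - sqrt (T^2 - 4 * D)) / 2"
definition "M = A_alpha a (m+n) (complete_split m n)"
definition "qs = [l0, a * real m, th1, th2]"

lemma disc: "T^2 - 4 * D = (Q11 - Q22)^2 + 4 * (Q12 * Q21)"
  by (simp add: T_def D_def power2_eq_square algebra_simps)

lemma Q12Q21_pos: "Q12 * Q21 > 0"
  using m1 n2 a2 by (simp add: Q12_def Q21_def)

lemma disc_pos: "T^2 - 4 * D > 0"
proof -
  have "(Q11 - Q22)^2 \<ge> 0" by simp
  then show ?thesis using disc Q12Q21_pos by linarith
qed

lemma th_sum: "th1 + th2 = T"
  by (simp add: th1_def th2_def field_simps)

lemma th_prod: "th1 * th2 = D"
proof -
  have s: "(sqrt (T^2 - 4 * D))^2 = T^2 - 4 * D" using disc_pos by simp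
  have "th1 * th2 = (T^2 - (sqrt (T^2 - 4 * D))^2) / 4"
    unfolding th1_def th2_def by (simp add: field_simps power2_eq_square)
  then show ?thesis using s by simp
qed

lemma th_lt: "th2 < th1"
  using disc_pos by (simp add: th1_def th2_def)

lemma th_root: "th1^2 - T * th1 + D = 0" "th2^2 - T * th2 + D = 0"
proof -
  have e: "th2 = T - th1" using th_sum by simp
  show "th1^2 - T * th1 + D = 0" using th_prod unfolding e by (simp add: power2_eq_square algebra_simps)
  show "th2^2 - T * th2 + D = 0" using th_prod unfolding e by (simp add: power2_eq_square algebra_simps)
qed

lemma M_smat: "M = smat m n (a * (Nr - 1)) (1 - a) (1 - a) (1 - a) (a * real m) 0"
  unfolding M_def Nr_def by (rule cs_mat[OF m1])

lemma M_carrier[simp]: "M \<in> carrier_mat (m+n) (m+n)"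
  by (simp add: M_def)

lemma smat_lin2: "(smat m n p1 p2 p3 p4 p5 p6 - x \<cdot>\<^sub>m 1\<^sub>m (m+n)) * (smat m n p1 p2 p3 p4 p5 p6 - y \<cdot>\<^sub>m 1\<^sub>m (m+n))
  = smat m n (p1*p1 + (real m - 1)*p2*p2 + real n*p3*p4 - (x + y) * p1 + x * y)
            (p1*p2 + p2*p1 + (real m - 2)*p2*p2 + real n*p3*p4 - (x + y) * p2)
            ((p1 + (real m - 1)*p2)*p3 + p3*(p5 + (real n - 1)*p6) - (x + y) * p3)
            (p4*(p1 + (real m - 1)*p2) + (p5 + (real n - 1)*p6)*p4 - (x + y) * p4)
            (real m*p4*p3 + p5*p5 + (real n - 1)*p6*p6 - (x + y) * p5 + x * y)
            (real m*p4*p3 + p5*p6 + p6*p5 + (real n - 2)*p6*p6 - (x + y) * p6)"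
  unfolding smat_minus smat_mult by (rule smat_eqI) (simp_all add: algebra_simps)

lemma lprod_qs: "lprod M qs = (M - l0 \<cdot>\<^sub>m 1\<^sub>m (m+n)) * ((M - (a * real m) \<cdot>\<^sub>m 1\<^sub>m (m+n)) *
   ((M - th1 \<cdot>\<^sub>m 1\<^sub>m (m+n)) * (M - th2 \<cdot>\<^sub>m 1\<^sub>m (m+n))))"
proof -
  have d: "dim_row M = m + n" by (simp add: M_def)
  show ?thesis unfolding qs_def by (simp add: lprod_Cons d right_mult_one_mat[of _ "m+n" "m+n"])
qed

lemma annih: "lprod M qs = 0\<^sub>m (m+n) (m+n)"
proof -
  define A where "A = a * (Nr - 1)"
  define b where "b = 1 - a"
  define E where "E = a * real m"
  have X34: "(M - th1 \<cdot>\<^sub>m 1\<^sub>m (m+n)) * (M - th2 \<cdot>\<^sub>m 1\<^sub>m (m+n)) =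
    smat m n (A*A + (real m - 1)*b*b + real n*b*b - T * A + D)
            (A*b + b*A + (real m - 2)*b*b + real n*b*b - T * b)
            ((A + (real m - 1)*b)*b + b*E - T * b)
            (b*(A + (real m - 1)*b) + E*b - T * b)
            (real m*b*b + E*E - T * E + D)
            (real m*b*b)"
    unfolding M_smat smat_lin2 th_sum th_prod A_def[symmetric] b_def[symmetric] E_def[symmetric]
    by (rule smat_eqI) simp_all
  show ?thesis unfolding lprod_qs X34 unfolding M_smat smat_minus smat_mult smat_zero[symmetric]
    unfolding A_def[symmetric] b_def[symmetric] E_def[symmetric]
    by (rule smat_eqI) (simp_all add: A_def b_def E_def T_def D_def Q11_def Q12_def Q21_def Q22_def l0_def Nr_def algebra_simps)
qed

end




lemma tr_smult: "X \<in> carrier_mat N N \<Longrightarrow> tr (c \<cdot>\<^sub>m X) = c * tr (X :: real mat)"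
  by (simp add: tr_def sum_distrib_left)

lemma tr_add: "X \<in> carrier_mat N N \<Longrightarrow> Y \<in> carrier_mat N N \<Longrightarrow> tr (X + Y) = tr X + tr (Y :: real mat)"
  by (simp add: tr_def sum.distrib)

lemma tr_zero: "tr (0\<^sub>m N N :: real mat) = 0"
  by (simp add: tr_def)

lemma trsq: assumes X: "X \<in> carrier_mat N N" and s: "transpose_mat X = X"
  shows "tr (X * X) = (\<Sum>i<N. \<Sum>j<N. ((X::real mat) $$ (i,j))^2)"
proof -
  have sy: "\<And>i j. i < N \<Longrightarrow> j < N \<Longrightarrow> X $$ (j,i) = X $$ (i,j)"
    using s X by (metis carrier_matD index_transpose_mat(1))
  have "tr (X * X) = (\<Sum>i<N. \<Sum>j<N. X $$ (i,j) * X $$ (j,i))"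
    using X by (simp add: tr_def scalar_prod_def atLeast0LessThan)
  also have "\<dots> = (\<Sum>i<N. \<Sum>j<N. (X $$ (i,j))^2)"
    by (intro sum.cong refl) (simp add: sy power2_eq_square)
  finally show ?thesis .
qed

lemma frob: fixes X :: "real mat" assumes X: "X \<in> carrier_mat N N" and s: "transpose_mat X = X" and t: "tr (X * X) = 0"
  shows "X = 0\<^sub>m N N"
proof (rule eq_matI)
  fix i j assume "i < dim_row (0\<^sub>m N N :: real mat)" "j < dim_col (0\<^sub>m N N :: real mat)"
  then have i: "i < N" and j: "j < N" by auto
  have z: "(\<Sum>i<N. \<Sum>j<N. (X $$ (i,j))^2) = 0" using trsq[OF X s] t by simp
  have "\<forall>i\<in>{..<N}. (\<Sum>j<N. (X $$ (i,j))^2) = 0"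
    using z sum_nonneg_eq_0_iff[of "{..<N}" "\<lambda>i. \<Sum>j<N. (X $$ (i,j))^2"]
    by (simp add: sum_nonneg)
  then have "(\<Sum>j<N. (X $$ (i,j))^2) = 0" using i by auto
  then have "\<forall>j\<in>{..<N}. (X $$ (i,j))^2 = 0"
    using sum_nonneg_eq_0_iff[of "{..<N}" "\<lambda>j. (X $$ (i,j))^2"] by simp
  then show "X $$ (i,j) = 0\<^sub>m N N $$ (i,j)" using i j by auto
qed (use X in auto)

lemma tr_pos: fixes X :: "real mat" assumes X: "X \<in> carrier_mat N N" and s: "transpose_mat X = X" and id: "X * X = X"
  and nz: "X \<noteq> 0\<^sub>m N N"
  shows "tr X > 0"
proof -
  have "tr (X * X) \<ge> 0" unfolding trsq[OF X s] by (intro sum_nonneg) simp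
  then have "tr X \<ge> 0" using id by simp
  moreover have "tr X \<noteq> 0" using frob[OF X s] id nz by auto
  ultimately show ?thesis by simp
qed

lemma mult_entry: assumes "A \<in> carrier_mat N N" "B \<in> carrier_mat N k" "i < N" "j < k"
  shows "(A * B) $$ (i,j) = (\<Sum>l<N. A $$ (i,l) * B $$ (l,j))"
  using assms by (simp add: scalar_prod_def atLeast0LessThan)

lemma sym_entry: assumes "X \<in> carrier_mat N N" "transpose_mat X = X" "i < N" "j < N"
  shows "X $$ (i,j) = X $$ (j,i)"
  using assms by (metis carrier_matD index_transpose_mat(1))

definition vpq :: "nat \<Rightarrow> nat \<Rightarrow> nat \<Rightarrow> real mat" where
  "vpq N p q = mat N 1 (\<lambda>(i,_). (if i = p then 1 else 0) - (if i = q then 1 else 0))"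

lemma vpq_carrier[simp]: "vpq N p q \<in> carrier_mat N 1"
  by (simp add: vpq_def)

lemma sum_vpq: fixes N :: nat assumes "p < N" "q < N" "p \<noteq> q"
  shows "(\<Sum>l<N. f l * ((if l = p then 1 else 0) - (if l = q then 1 else 0))) = f p - (f q :: real)"
proof -
  have "(\<Sum>l<N. f l * ((if l = p then 1 else 0) - (if l = q then 1 else 0))) =
        (\<Sum>l<N. (if l = p then f l else 0) - (if l = q then f l else 0))"
    by (intro sum.cong refl) auto
  also have "\<dots> = (\<Sum>l<N. (if l = p then f l else 0)) - (\<Sum>l<N. (if l = q then f l else 0))"
    by (rule sum_subtractf)
  also have "\<dots> = f p - f q" using assms by simp
  finally show ?thesis .
qed

lemma vpq_eigen: assumes g: "simple_graph N E" and p: "p \<in> domv N E" and q: "q \<in> domv N E" and pq: "p \<noteq> q"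
  shows "A_alpha a N E * vpq N p q = (a * real N - 1) \<cdot>\<^sub>m vpq N p q"
proof (rule eq_matI)
  fix i j assume "i < dim_row ((a * real N - 1) \<cdot>\<^sub>m vpq N p q)" "j < dim_col ((a * real N - 1) \<cdot>\<^sub>m vpq N p q)"
  then have i: "i < N" and j: "j = 0" by (auto simp: vpq_def)
  have pN: "p < N" and qN: "q < N" using p q by (auto simp: domv_def)
  have "(A_alpha a N E * vpq N p q) $$ (i,j) = (\<Sum>l<N. A_alpha a N E $$ (i,l) * ((if l = p then 1 else 0) - (if l = q then 1 else 0)))"
    using i j by (subst mult_entry[of _ N _ 1]) (auto simp: vpq_def)
  also have "\<dots> = A_alpha a N E $$ (i,p) - A_alpha a N E $$ (i,q)"
    using pN qN pq by (rule sum_vpq)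
  also have "\<dots> = ((a * real N - 1) \<cdot>\<^sub>m vpq N p q) $$ (i,j)"
  proof -
    have dp: "degree N E p = N - 1" and dq: "degree N E q = N - 1"
      using dom_deg[OF g p] dom_deg[OF g q] by auto
    have N1: "N \<ge> 1" using pN by simp
    have Epq: "E p q" "E q p" using p q pq qN pN by (auto simp: domv_def)
    have Eip: "i \<noteq> p \<Longrightarrow> E i p" using p i g by (auto simp: domv_def simple_graph_def)
    have Eiq: "i \<noteq> q \<Longrightarrow> E i q" using q i g by (auto simp: domv_def simple_graph_def)
    have irr: "\<not> E p p" "\<not> E q q" using g by (auto simp: simple_graph_def)
    show ?thesis using i j pN qN pq Epq Eip Eiq N1 irr
      by (auto simp: A_entry vpq_def dp dq of_nat_diff algebra_simps)
  qed
  finally show "(A_alpha a N E * vpq N p q) $$ (i,j) = ((a * real N - 1) \<cdot>\<^sub>m vpq N p q) $$ (i,j)" .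
qed (auto simp: vpq_def)

lemma TRDproj:
  assumes g: "simple_graph N E" and a1: "1/2 < a" and a2: "a < 1" and ne: "domv N E \<noteq> {}"
    and ss: "specsetup (A_alpha a N E) N qs" and l0: "a * real N - 1 \<in> set qs"
  shows "tr (proj (A_alpha a N E) qs (a * real N - 1)) = real (card (domv N E)) - 1"
proof -
  interpret specsetup "A_alpha a N E" N qs by (rule ss)
  let ?l = "a * real N - 1"
  let ?X = "proj (A_alpha a N E) qs ?l"
  have X: "?X \<in> carrier_mat N N" by simp
  have sX: "transpose_mat ?X = ?X" by (rule proj_sym[OF A_sym[OF g]])
  have ev: "A_alpha a N E * ?X = ?l \<cdot>\<^sub>m ?X" by (rule proj_eigen[OF l0])
  have "tr ?X = (\<Sum>i<N. ?X $$ (i,i))" using carrier_matD[OF X] by (simp add: tr_def)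
  also have "\<dots> = real (card (domv N E)) - 1"
  proof (rule TRD[OF g a1 a2 ne])
    fix i j assume "i < N" "j < N" then show "?X $$ (i,j) = ?X $$ (j,i)" by (rule sym_entry[OF X sX])
  next
    fix i k assume i: "i < N" and k: "k < N"
    have "(A_alpha a N E * ?X) $$ (i,k) = (\<Sum>j<N. A_alpha a N E $$ (i,j) * ?X $$ (j,k))"
      by (rule mult_entry[OF A_carrier X i k])
    then show "(\<Sum>j<N. A_alpha a N E $$ (i,j) * ?X $$ (j,k)) = ?l * ?X $$ (i,k)"
      using ev i k X by simp
  next
    fix p q i assume p: "p \<in> domv N E" and q: "q \<in> domv N E" and pq: "p \<noteq> q" and i: "i < N"
    have pN: "p < N" and qN: "q < N" using p q by (auto simp: domv_def)
    have fx: "?X * vpq N p q = vpq N p q"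
      by (rule proj_fix[OF l0 vpq_carrier vpq_eigen[OF g p q pq]])
    have "(?X * vpq N p q) $$ (i,0) = (\<Sum>l<N. ?X $$ (i,l) * ((if l = p then 1 else 0) - (if l = q then 1 else 0)))"
      using i by (subst mult_entry[OF X vpq_carrier]) (auto simp: vpq_def)
      also have "\<dots> = ?X $$ (i,p) - ?X $$ (i,q)" using pN qN pq by (rule sum_vpq)
    finally show "?X $$ (i,p) - ?X $$ (i,q) = (if i = p then 1 else 0) - (if i = q then 1 else 0)"
      using fx i by (simp add: vpq_def)
  qed
  finally show ?thesis .
qed




lemma minus0: "A \<in> carrier_mat N N \<Longrightarrow> A - (0::real) \<cdot>\<^sub>m 1\<^sub>m N = A"
  by (intro eq_matI) auto

lemma lprod0: "A \<in> carrier_mat N N \<Longrightarrow> lprod A [0] = (A :: real mat)"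
  by (auto simp: lprod_Cons right_mult_one_mat[of _ N N] carrier_matD)

lemma lprod00: "A \<in> carrier_mat N N \<Longrightarrow> lprod A [0,0] = A * (A :: real mat)"
  by (auto simp: lprod_Cons right_mult_one_mat[of _ N N] carrier_matD minus0)

lemma tr_A: assumes g: "simple_graph N E"
  shows "tr (A_alpha a N E) = a * (\<Sum>i<N. real (degree N E i))"
  using g by (simp add: tr_def A_entry sum_distrib_left simple_graph_def)

lemma tr_A2: assumes g: "simple_graph N E"
  shows "tr (A_alpha a N E * A_alpha a N E) = a^2 * (\<Sum>i<N. (real (degree N E i))^2) + (1 - a)^2 * (\<Sum>i<N. real (degree N E i))"
proof -
  let ?A = "A_alpha a N E"
  have "tr (?A * ?A) = (\<Sum>i<N. \<Sum>j<N. ?A $$ (i,j) * ?A $$ (j,i))"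
    by (simp add: tr_def scalar_prod_def atLeast0LessThan)
  also have "\<dots> = (\<Sum>i<N. a^2 * (real (degree N E i))^2 + (1 - a)^2 * (\<Sum>j<N. if E i j then 1 else 0))"
  proof (rule sum.cong[OF refl])
    fix i assume "i \<in> {..<N}" then have i: "i < N" by simp
    have "(\<Sum>j<N. ?A $$ (i,j) * ?A $$ (j,i)) = (\<Sum>j<N. (if j = i then a^2 * (real (degree N E i))^2 else 0) + (1 - a)^2 * (if E i j then 1 else 0))"
      using g i by (intro sum.cong refl) (auto simp: A_entry simple_graph_def power2_eq_square)
    also have "\<dots> = a^2 * (real (degree N E i))^2 + (1 - a)^2 * (\<Sum>j<N. if E i j then 1 else 0)"
      using i by (simp add: sum.distrib sum_distrib_left[symmetric])
    finally show "(\<Sum>j<N. ?A $$ (i,j) * ?A $$ (j,i)) = a^2 * (real (degree N E i))^2 + (1 - a)^2 * (\<Sum>j<N. if E i j then 1 else 0)" .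
  qed
  also have "\<dots> = a^2 * (\<Sum>i<N. (real (degree N E i))^2) + (1 - a)^2 * (\<Sum>i<N. real (degree N E i))"
    by (simp add: sum.distrib sum_distrib_left deg_sum)
  finally show ?thesis .
qed

lemma deg_full_dom: assumes g: "simple_graph N E" and i: "i < N" and d: "degree N E i = N - 1"
  shows "i \<in> domv N E"
proof -
  have sub: "{j. j < N \<and> E i j} \<subseteq> {..<N} - {i}" using g by (auto simp: simple_graph_def)
  have "card {j. j < N \<and> E i j} = card ({..<N} - {i})" using d i by (simp add: degree_def)
  then have "{j. j < N \<and> E i j} = {..<N} - {i}"
    using sub by (intro card_subset_eq) auto
  then show ?thesis using i by (auto simp: domv_def)
qed

lemma FIN:
  assumes g: "simple_graph (m+n) E" and Dsub: "D \<subseteq> domv (m+n) E" and cD: "card D = m"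
    and sm: "(\<Sum>i<m+n. real (degree (m+n) E i)) = real m * (real (m+n) - 1) + real n * real m"
  shows "graph_iso (m+n) E (m+n) (complete_split m n)"
proof -
  let ?N = "m + n"
  have DN: "D \<subseteq> {..<?N}" using Dsub by (auto simp: domv_def)
  have fD: "finite D" using DN finite_subset by blast
  let ?R = "{..<?N} - D"
  have cR: "card ?R = n" using DN cD fD by (simp add: card_Diff_subset)
  have symE: "\<And>i j. E i j \<Longrightarrow> E j i" and irr: "\<And>i. \<not> E i i" using g by (auto simp: simple_graph_def)
  have nbD: "\<And>i. i < ?N \<Longrightarrow> i \<notin> D \<Longrightarrow> D \<subseteq> {j. j < ?N \<and> E i j}"
  proof
    fix i u assume i: "i < ?N" "i \<notin> D" and u: "u \<in> D"
    have "E u i" using Dsub u i by (auto simp: domv_def)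
    then show "u \<in> {j. j < ?N \<and> E i j}" using symE DN u by auto
  qed
  have degR: "\<And>i. i \<in> ?R \<Longrightarrow> degree ?N E i \<ge> m"
  proof -
    fix i assume "i \<in> ?R"
    then have i: "i < ?N" "i \<notin> D" by auto
    have "card D \<le> card {j. j < ?N \<and> E i j}" by (rule card_mono[OF _ nbD[OF i]]) auto
    then show "degree ?N E i \<ge> m" using cD by (simp add: degree_def)
  qed
  have degD: "\<And>i. i \<in> D \<Longrightarrow> degree ?N E i = ?N - 1" using Dsub dom_deg[OF g] by auto
  have split: "(\<Sum>i<?N. real (degree ?N E i)) = (\<Sum>i\<in>D. real (degree ?N E i)) + (\<Sum>i\<in>?R. real (degree ?N E i))"
    using DN fD by (metis (no_types, lifting) finite_lessThan sum.subset_diff add.commute)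
  have sD: "(\<Sum>i\<in>D. real (degree ?N E i)) = real m * (real ?N - 1)"
    using degD cD by (cases "m = 0") (auto simp: of_nat_diff)
  have "(\<Sum>i\<in>?R. real (degree ?N E i) - real m) = (\<Sum>i\<in>?R. real (degree ?N E i)) - real n * real m"
    using cR by (simp add: sum_subtractf)
  also have "\<dots> = 0" using sm split sD by simp
  finally have z: "(\<Sum>i\<in>?R. real (degree ?N E i) - real m) = 0" .
  have degR': "\<And>i. i \<in> ?R \<Longrightarrow> degree ?N E i = m"
  proof -
    have "\<forall>i\<in>?R. real (degree ?N E i) - real m = 0"
      using z sum_nonneg_eq_0_iff[of ?R "\<lambda>i. real (degree ?N E i) - real m"] degR by simp
    then show "\<And>i. i \<in> ?R \<Longrightarrow> degree ?N E i = m" by simp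
  qed
  have nbR: "\<And>i. i < ?N \<Longrightarrow> i \<notin> D \<Longrightarrow> {j. j < ?N \<and> E i j} = D"
  proof -
    fix i assume i: "i < ?N" "i \<notin> D"
    have "card D = card {j. j < ?N \<and> E i j}" using degR'[of i] i cD by (simp add: degree_def)
    then show "{j. j < ?N \<and> E i j} = D"
      using nbD[OF i] by (intro card_subset_eq[symmetric]) auto
  qed
  have Echar: "\<And>i j. i < ?N \<Longrightarrow> j < ?N \<Longrightarrow> E i j = (i \<noteq> j \<and> (i \<in> D \<or> j \<in> D))"
  proof -
    fix i j assume i: "i < ?N" and j: "j < ?N"
    show "E i j = (i \<noteq> j \<and> (i \<in> D \<or> j \<in> D))"
    proof
      assume e: "E i j"
      have "i \<noteq> j" using e irr by auto
      moreover have "i \<in> D \<or> j \<in> D" using nbR[OF i] e j by auto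
      ultimately show "i \<noteq> j \<and> (i \<in> D \<or> j \<in> D)" by simp
    next
      assume h: "i \<noteq> j \<and> (i \<in> D \<or> j \<in> D)"
      show "E i j"
      proof (cases "i \<in> D")
        case True then show ?thesis using Dsub h j by (auto simp: domv_def)
      next
        case False then have "j \<in> D" using h by simp
        then have "E j i" using Dsub h i by (auto simp: domv_def)
        then show ?thesis using symE by simp
      qed
    qed
  qed
  obtain f1 where f1: "bij_betw f1 D {..<m}"
    using finite_same_card_bij[OF fD finite_lessThan] cD by auto
  obtain f2 where f2: "bij_betw f2 ?R {m..<?N}"
    using finite_same_card_bij[of ?R "{m..<?N}"] cR by auto
  define f where "f x = (if x \<in> D then f1 x else f2 x)" for x
  have b1: "bij_betw f D {..<m}" using f1 by (rule bij_betw_cong[THEN iffD1, rotated]) (simp add: f_def)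
  have b2: "bij_betw f ?R {m..<?N}" using f2 by (rule bij_betw_cong[THEN iffD1, rotated]) (simp add: f_def)
  have bf: "bij_betw f (D \<union> ?R) ({..<m} \<union> {m..<?N})"
    by (rule bij_betw_combine[OF b1 b2]) auto
  have e1: "D \<union> ?R = {0..<?N}" using DN by auto
  have e2: "{..<m} \<union> {m..<?N} = {0..<?N}" by auto
  have bf: "bij_betw f {0..<?N} {0..<?N}" using bf e1 e2 by simp
  have fin: "\<And>i. i < ?N \<Longrightarrow> f i < ?N" using bij_betwE[OF bf] by simp
  have fm: "\<And>i. i < ?N \<Longrightarrow> (f i < m) = (i \<in> D)"
  proof -
    fix i assume i: "i < ?N"
    show "(f i < m) = (i \<in> D)"
    proof (cases "i \<in> D")
      case True then show ?thesis using bij_betwE[OF b1] by simp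
    next
      case False then have "i \<in> ?R" using i by auto
      then have "f i \<in> {m..<?N}" using bij_betwE[OF b2] by blast
      then show ?thesis using False by auto
    qed
  qed
  have finj: "\<And>i j. i < ?N \<Longrightarrow> j < ?N \<Longrightarrow> (f i = f j) = (i = j)"
  proof -
    fix i j assume i: "i < ?N" and j: "j < ?N"
    have inj: "inj_on f {0..<?N}" by (rule bij_betw_imp_inj_on[OF bf])
    show "(f i = f j) = (i = j)" using inj_onD[OF inj, of i j] i j by auto
  qed
  show ?thesis unfolding graph_iso_def
  proof (intro exI conjI allI impI)
    show "bij_betw f {0..<?N} {0..<?N}" by (rule bf)
  next
    fix i j assume i: "i < ?N" and j: "j < ?N"
    show "E i j = complete_split m n (f i) (f j)"
      unfolding complete_split_def Echar[OF i j] fm[OF i, symmetric] fm[OF j, symmetric] finj[OF i j, symmetric]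
      using fin[OF i] fin[OF j] by simp
  qed
qed

lemma isolated_root:
  assumes g: "simple_graph N E" and ss: "specsetup (A_alpha a N E) N qs"
    and i: "i < N" and iso: "\<And>j. \<not> E i j"
  shows "0 \<in> set qs"
proof -
  interpret specsetup "A_alpha a N E" N qs by (rule ss)
  define U where "U = mat N 1 (\<lambda>(j,_). if j = i then 1 else (0::real))"
  have U: "U \<in> carrier_mat N 1" by (simp add: U_def)
  have d0: "degree N E i = 0" using iso by (simp add: degree_def)
  have AU: "A_alpha a N E * U = 0 \<cdot>\<^sub>m U"
  proof (rule eq_matI)
    fix k l assume "k < dim_row (0 \<cdot>\<^sub>m U)" "l < dim_col (0 \<cdot>\<^sub>m U)"
    then have k: "k < N" and l: "l = 0" by (auto simp: U_def)
    have "(A_alpha a N E * U) $$ (k,l) = (\<Sum>j<N. A_alpha a N E $$ (k,j) * (if j = i then 1 else 0))"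
      using k l by (subst mult_entry[OF A_carrier U]) (auto simp: U_def)
    also have "\<dots> = A_alpha a N E $$ (k,i)" using i by (simp add: if_distrib cong: if_cong)
    also have "\<dots> = 0"
    proof -
      have nk: "\<not> E k i" using iso g unfolding simple_graph_def by blast
      show ?thesis using k i nk d0 by (auto simp: A_entry)
    qed
    finally show "(A_alpha a N E * U) $$ (k,l) = (0 \<cdot>\<^sub>m U) $$ (k,l)" using k l by (simp add: U_def)
  qed (auto simp: U_def)
  have "lprod (A_alpha a N E) qs * U = (\<Prod>d\<leftarrow>qs. 0 - d) \<cdot>\<^sub>m U"
    by (rule lprod_eigen[OF A_carrier U AU])
  then have "(\<Prod>d\<leftarrow>qs. 0 - d) \<cdot>\<^sub>m U = 0\<^sub>m N 1" using ann U by simp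
  then have "((\<Prod>d\<leftarrow>qs. 0 - d) \<cdot>\<^sub>m U) $$ (i,0) = 0" using i by simp
  then have "(\<Prod>d\<leftarrow>qs. 0 - d) = 0" using i by (simp add: U_def)
  then show ?thesis by (auto simp: prod_list_zero_iff)
qed




lemma cs_degsum: assumes m: "1 \<le> m"
  shows "(\<Sum>i<m+n. real (degree (m+n) (complete_split m n) i)) = real m * (real (m+n) - 1) + real n * real m"
    "(\<Sum>i<m+n. (real (degree (m+n) (complete_split m n) i))^2) = real m * (real (m+n) - 1)^2 + real n * (real m)^2"
proof -
  have C: "\<And>i. i < m \<Longrightarrow> real (degree (m+n) (complete_split m n) i) = real (m+n) - 1"
    using m by (simp add: cs_deg_C of_nat_diff)
  have I: "\<And>i. i \<in> {m..<m+n} \<Longrightarrow> real (degree (m+n) (complete_split m n) i) = real m"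
    by (simp add: cs_deg_I)
  show "(\<Sum>i<m+n. real (degree (m+n) (complete_split m n) i)) = real m * (real (m+n) - 1) + real n * real m"
    by (simp add: split_range C I)
  show "(\<Sum>i<m+n. (real (degree (m+n) (complete_split m n) i))^2) = real m * (real (m+n) - 1)^2 + real n * (real m)^2"
    by (simp add: split_range C I)
qed

lemma smat_eig:
  fixes m n :: nat
  assumes h11: "q11 = a0 + (real m - 1) * b0" and h12: "q12 = real n * b0" and h21: "q21 = real m * b0"
   and r: "th * (th - q11) = e0 * (th - q11) + q12 * q21"
  shows "smat m n a0 b0 b0 b0 e0 0 * smat m n q12 q12 q12 (th - q11) (th - q11) (th - q11)
     = th \<cdot>\<^sub>m smat m n q12 q12 q12 (th - q11) (th - q11) (th - q11)"
  unfolding smat_mult smat_smult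
proof (rule smat_eqI)
  show "a0 * q12 + (real m - 1) * b0 * q12 + real n * b0 * (th - q11) = th * q12"
    unfolding h11 h12 by (simp add: algebra_simps)
  show "a0 * q12 + b0 * q12 + (real m - 2) * b0 * q12 + real n * b0 * (th - q11) = th * q12"
    unfolding h11 h12 by (simp add: algebra_simps)
  show "(a0 + (real m - 1) * b0) * q12 + b0 * (th - q11 + (real n - 1) * (th - q11)) = th * q12"
    unfolding h11 h12 by (simp add: algebra_simps)
  show "b0 * (q12 + (real m - 1) * q12) + (e0 + (real n - 1) * 0) * (th - q11) = th * (th - q11)"
    unfolding r unfolding h12 h21 by (simp add: algebra_simps)
  show "real m * b0 * q12 + e0 * (th - q11) + (real n - 1) * 0 * (th - q11) = th * (th - q11)"
    unfolding r unfolding h12 h21 by (simp add: algebra_simps)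
  show "real m * b0 * q12 + e0 * (th - q11) + 0 * (th - q11) + (real n - 2) * 0 * (th - q11) = th * (th - q11)"
    unfolding r unfolding h12 h21 by (simp add: algebra_simps)
qed

context cs
begin

lemma l0_N: "a * real (m+n) - 1 = l0" by (simp add: l0_def Nr_def)

lemma prod_l0: "(th1 - l0) * (th2 - l0) = (1 - a) * real m * (1 - real n)"
proof -
  have "(th1 - l0) * (th2 - l0) = l0^2 - (th1 + th2) * l0 + th1 * th2"
    by (simp add: power2_eq_square algebra_simps)
  also have "\<dots> = (1 - a) * real m * (1 - real n)"
    unfolding th_sum th_prod by (simp add: l0_def T_def D_def Q11_def Q12_def Q21_def Q22_def Nr_def power2_eq_square algebra_simps)
  finally show ?thesis .
qed

lemma prod_am: "(th1 - a * real m) * (th2 - a * real m) = - (Q12 * Q21)"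
proof -
  have "(th1 - a * real m) * (th2 - a * real m) = (a * real m)^2 - (th1 + th2) * (a * real m) + th1 * th2"
    by (simp add: power2_eq_square algebra_simps)
  also have "\<dots> = - (Q12 * Q21)"
    unfolding th_sum th_prod by (simp add: T_def D_def Q11_def Q12_def Q21_def Q22_def power2_eq_square algebra_simps)
  finally show ?thesis .
qed

lemma between: assumes "(th1 - x) * (th2 - x) < 0" shows "th2 < x" "x < th1"
proof -
  have "th2 < x \<and> x < th1"
  proof (rule ccontr)
    assume "\<not> (th2 < x \<and> x < th1)"
    then have "x \<le> th2 \<or> th1 \<le> x" by auto
    then have "(th1 - x) * (th2 - x) \<ge> 0"
      using th_lt by (auto intro: mult_nonneg_nonneg mult_nonpos_nonpos)
    then show False using assms by simp
  qed
  then show "th2 < x" "x < th1" by auto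
qed

lemma order: "th2 < a * real m" "a * real m < l0" "l0 < th1"
proof -
  have "(th1 - l0) * (th2 - l0) < 0"
    unfolding prod_l0 using m1 n2 a2 by (simp add: mult_pos_neg)
  then show "l0 < th1" by (rule between)
  have "(th1 - a * real m) * (th2 - a * real m) < 0"
    unfolding prod_am using Q12Q21_pos by simp
  then show "th2 < a * real m" by (rule between)
  have "a * real n > 1"
  proof -
    have "a * real n \<ge> a * 2" using n2 a1 by (intro mult_left_mono) auto
    then show ?thesis using a1 by linarith
  qed
  then show "a * real m < l0" by (simp add: l0_def Nr_def algebra_simps)
qed

lemma am_pos: "a * real m > 0" using m1 a1 by simp

lemma pos: "0 < th2"
proof -
  have Q11: "Q11 \<ge> a * real n"
  proof -
    have "a * (Nr - 1) \<ge> a * real n" using m1 a1 by (intro mult_left_mono) (auto simp: Nr_def)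
    moreover have "(1 - a) * (real m - 1) \<ge> 0" using m1 a2 by simp
    ultimately show ?thesis by (simp add: Q11_def)
  qed
  have "Q11 * Q22 \<ge> (a * real n) * Q22"
    by (rule mult_right_mono[OF Q11]) (use a1 in \<open>simp add: Q22_def\<close>)
  then have "Q11 * Q22 \<ge> (a * real n) * (a * real m)" by (simp add: Q22_def)
  moreover have "(a * real n) * (a * real m) > ((1 - a) * real n) * ((1 - a) * real m)"
  proof -
    have "a * a > (1 - a) * (1 - a)" using a1 a2 by (intro mult_strict_mono) auto
    then have "(a * a) * (real n * real m) > ((1 - a) * (1 - a)) * (real n * real m)"
      using m1 n2 by (intro mult_strict_right_mono) auto
    then show ?thesis by (simp add: algebra_simps)
  qed
  ultimately have D: "D > 0" by (simp add: D_def Q12_def Q21_def)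
  have "th1 > 0" using order am_pos by linarith
  then show ?thesis using th_prod D by (metis zero_less_mult_pos)
qed

lemma qs_pos: "\<And>x. x \<in> set qs \<Longrightarrow> x > 0"
  using order am_pos pos by (auto simp: qs_def)

lemma qs_dist: "distinct qs"
  using order by (auto simp: qs_def)

definition "V = smat m n Q12 Q12 Q12 (th1 - Q11) (th1 - Q11) (th1 - Q11)"

lemma V_eigen: "M * V = th1 \<cdot>\<^sub>m V"
proof -
  have r: "th1 * (th1 - Q11) = a * real m * (th1 - Q11) + Q12 * Q21"
    using th_root(1) by (simp add: T_def D_def Q22_def power2_eq_square algebra_simps)
  show ?thesis unfolding M_smat V_def
    by (rule smat_eig[OF _ _ _ r]) (simp_all add: Q11_def Q12_def Q21_def)
qed

lemma V_nz: "V \<noteq> 0\<^sub>m (m+n) (m+n)"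
proof
  assume "V = 0\<^sub>m (m+n) (m+n)"
  then have "V $$ (0,0) = 0" using m1 by simp
  moreover have "V $$ (0,0) = Q12" using m1 by (simp add: V_def smat_index)
  ultimately show False using m1 n2 a2 by (simp add: Q12_def)
qed

end




lemma mv_assoc: assumes X: "X \<in> carrier_mat N N" and Y: "Y \<in> carrier_mat N N" and i: "i < N"
  shows "(\<Sum>j<N. X $$ (i,j) * (\<Sum>k<N. Y $$ (j,k) * y k)) = (\<Sum>k<N. (X * Y) $$ (i,k) * (y k :: real))"
proof -
  have "(\<Sum>j<N. X $$ (i,j) * (\<Sum>k<N. Y $$ (j,k) * y k)) = (\<Sum>j<N. \<Sum>k<N. X $$ (i,j) * Y $$ (j,k) * y k)"
    by (simp add: sum_distrib_left mult.assoc)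
  also have "\<dots> = (\<Sum>k<N. \<Sum>j<N. X $$ (i,j) * Y $$ (j,k) * y k)" by (rule sum.swap)
  also have "\<dots> = (\<Sum>k<N. (X * Y) $$ (i,k) * y k)"
  proof (rule sum.cong[OF refl])
    fix k assume "k \<in> {..<N}" then have k: "k < N" by simp
    show "(\<Sum>j<N. X $$ (i,j) * Y $$ (j,k) * y k) = (X * Y) $$ (i,k) * y k"
      by (simp add: mult_entry[OF X Y i k] sum_distrib_right)
  qed
  finally show ?thesis .
qed

lemma quad_idem: assumes E: "E \<in> carrier_mat N N" and s: "transpose_mat E = E" and id: "E * E = E"
  shows "(\<Sum>i<N. y i * (\<Sum>k<N. E $$ (i,k) * y k)) \<ge> (0::real)"
proof -
  have "(\<Sum>i<N. y i * (\<Sum>k<N. E $$ (i,k) * y k)) = (\<Sum>i<N. y i * (\<Sum>l<N. E $$ (i,l) * (\<Sum>k<N. E $$ (l,k) * y k)))"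
  proof (rule sum.cong[OF refl])
    fix i assume "i \<in> {..<N}" then have i: "i < N" by simp
    show "y i * (\<Sum>k<N. E $$ (i,k) * y k) = y i * (\<Sum>l<N. E $$ (i,l) * (\<Sum>k<N. E $$ (l,k) * y k))"
      by (simp add: mv_assoc[OF E E i] id)
  qed
  also have "\<dots> = (\<Sum>l<N. (\<Sum>i<N. E $$ (l,i) * y i) * (\<Sum>k<N. E $$ (l,k) * y k))"
  proof -
    have "(\<Sum>i<N. y i * (\<Sum>l<N. E $$ (i,l) * (\<Sum>k<N. E $$ (l,k) * y k))) = (\<Sum>i<N. \<Sum>l<N. y i * E $$ (i,l) * (\<Sum>k<N. E $$ (l,k) * y k))"
      by (simp add: sum_distrib_left mult.assoc)
    also have "\<dots> = (\<Sum>l<N. \<Sum>i<N. y i * E $$ (i,l) * (\<Sum>k<N. E $$ (l,k) * y k))" by (rule sum.swap)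
    also have "\<dots> = (\<Sum>l<N. (\<Sum>i<N. E $$ (l,i) * y i) * (\<Sum>k<N. E $$ (l,k) * y k))"
    proof (rule sum.cong[OF refl])
      fix l assume "l \<in> {..<N}" then have l: "l < N" by simp
      show "(\<Sum>i<N. y i * E $$ (i,l) * (\<Sum>k<N. E $$ (l,k) * y k)) = (\<Sum>i<N. E $$ (l,i) * y i) * (\<Sum>k<N. E $$ (l,k) * y k)"
        by (simp add: sum_distrib_right sym_entry[OF E s _ l] mult.commute)
    qed
    finally show ?thesis .
  qed
  also have "\<dots> \<ge> 0" by (intro sum_nonneg) simp
  finally show ?thesis by simp
qed

lemma cone_lemma:
  assumes g: "simple_graph N E" and a1: "1/2 < a" and a2: "a < 1" and nd: "domv N E = {}"
    and F: "F \<in> carrier_mat N N" and E1: "E1 \<in> carrier_mat N N" and s: "transpose_mat E1 = E1"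
    and id: "E1 * E1 = E1" and c: "c \<ge> 0"
    and BF: "(A_alpha a N E - (a * real N - 1) \<cdot>\<^sub>m 1\<^sub>m N) * F = c \<cdot>\<^sub>m E1"
    and fy: "\<And>i. i < N \<Longrightarrow> (\<Sum>j<N. F $$ (i,j) * y j) = y i" and sy: "(\<Sum>i<N. y i) = 0"
  shows "\<forall>i<N. y i = 0"
proof -
  let ?A = "A_alpha a N E" and ?l = "a * real N - 1"
  let ?B = "?A - ?l \<cdot>\<^sub>m 1\<^sub>m N"
  have B: "?B \<in> carrier_mat N N" by auto
  have row: "\<And>i. i < N \<Longrightarrow> (\<Sum>j<N. ?A $$ (i,j) * y j) - ?l * y i = c * (\<Sum>k<N. E1 $$ (i,k) * y k)"
  proof -
    fix i assume i: "i < N"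
    have "(\<Sum>j<N. ?B $$ (i,j) * y j) = (\<Sum>j<N. ?A $$ (i,j) * y j - (if j = i then ?l * y i else 0))"
      using i by (intro sum.cong refl) (auto simp: algebra_simps)
    also have "\<dots> = (\<Sum>j<N. ?A $$ (i,j) * y j) - ?l * y i"
      using i by (simp add: sum_subtractf)
    finally have e1: "(\<Sum>j<N. ?B $$ (i,j) * y j) = (\<Sum>j<N. ?A $$ (i,j) * y j) - ?l * y i" .
    have "(\<Sum>j<N. ?B $$ (i,j) * y j) = (\<Sum>j<N. ?B $$ (i,j) * (\<Sum>k<N. F $$ (j,k) * y k))"
      by (intro sum.cong refl) (simp add: fy)
    also have "\<dots> = (\<Sum>k<N. (?B * F) $$ (i,k) * y k)" by (rule mv_assoc[OF B F i])
    also have "\<dots> = c * (\<Sum>k<N. E1 $$ (i,k) * y k)"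
      unfolding BF using i E1 by (simp add: sum_distrib_left mult.assoc)
    finally show "(\<Sum>j<N. ?A $$ (i,j) * y j) - ?l * y i = c * (\<Sum>k<N. E1 $$ (i,k) * y k)" using e1 by simp
  qed
  have q: "(\<Sum>i<N. y i * (?l * y i - (\<Sum>j<N. ?A $$ (i,j) * y j))) = - c * (\<Sum>i<N. y i * (\<Sum>k<N. E1 $$ (i,k) * y k))"
  proof -
    have "(\<Sum>i<N. y i * (?l * y i - (\<Sum>j<N. ?A $$ (i,j) * y j))) = (\<Sum>i<N. - c * (y i * (\<Sum>k<N. E1 $$ (i,k) * y k)))"
    proof (rule sum.cong[OF refl])
      fix i assume "i \<in> {..<N}" then have i: "i < N" by simp
      have "?l * y i - (\<Sum>j<N. ?A $$ (i,j) * y j) = - (c * (\<Sum>k<N. E1 $$ (i,k) * y k))" using row[OF i] by simp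
      then show "y i * (?l * y i - (\<Sum>j<N. ?A $$ (i,j) * y j)) = - c * (y i * (\<Sum>k<N. E1 $$ (i,k) * y k))" by simp
    qed
    then show ?thesis by (simp add: sum_distrib_left)
  qed
  have "- c * (\<Sum>i<N. y i * (\<Sum>k<N. E1 $$ (i,k) * y k)) \<le> 0"
    using quad_idem[OF E1 s id, of y] c by (simp add: mult_nonneg_nonneg)
  then have "(2 * a - 1) * (\<Sum>i<N. nb N E i * (y i)^2) \<le> 0"
    using QF[OF g a1 a2, of y] q sy by simp
  then have le: "(\<Sum>i<N. nb N E i * (y i)^2) \<le> 0" using a1 by (simp add: mult_le_0_iff)
  have nn: "\<And>i. nb N E i * (y i)^2 \<ge> 0" using nb_nonneg by simp
  have z: "\<forall>i\<in>{..<N}. nb N E i * (y i)^2 = 0"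
    using le nn sum_nonneg_eq_0_iff[of "{..<N}" "\<lambda>i. nb N E i * (y i)^2"]
    by (meson antisym finite_lessThan sum_nonneg)
  show ?thesis
  proof (intro allI impI)
    fix i assume i: "i < N"
    have "nb N E i \<ge> 1" using nondom_nb[OF g i] nd by simp
    moreover have "nb N E i * (y i)^2 = 0" using z i by simp
    ultimately show "y i = 0" by simp
  qed
qed




lemma tr_proj_eq:
  assumes A: "A \<in> carrier_mat N N" and B: "B \<in> carrier_mat N N"
    and t: "\<And>cs. tr (lprod A cs) = tr (lprod (B :: real mat) cs)"
  shows "tr (proj A qs x) = tr (proj B qs x)"
  unfolding proj_def using t by (simp add: tr_smult[OF lprod_carrier[OF A]] tr_smult[OF lprod_carrier[OF B]])

lemma sum_all_eq:
  fixes d :: "nat \<Rightarrow> real"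
  assumes le: "\<And>i. i < N \<Longrightarrow> d i \<le> b" and s: "(\<Sum>i<N. d i) = real N * b"
  shows "\<And>i. i < N \<Longrightarrow> d i = b"
proof -
  have "(\<Sum>i<N. b - d i) = 0" using s by (simp add: sum_subtractf)
  then have "\<forall>i\<in>{..<N}. b - d i = 0"
    using sum_nonneg_eq_0_iff[of "{..<N}" "\<lambda>i. b - d i"] le by simp
  then show "\<And>i. i < N \<Longrightarrow> d i = b" by simp
qed

theorem main:
  fixes m n :: nat and \<alpha> :: real
  assumes m1: "m \<ge> 1" and n1: "n \<ge> 1" and a1: "1/2 < \<alpha>" and a2: "\<alpha> < 1"
  shows "determined_by_A_alpha_spectrum \<alpha> (m + n) (complete_split m n)"
  unfolding determined_by_A_alpha_spectrum_def
proof (intro allI impI)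
  fix n' E' assume g'0: "simple_graph n' E'"
    and sp: "spectrum_mset (A_alpha \<alpha> n' E') = spectrum_mset (A_alpha \<alpha> (m + n) (complete_split m n))"
  let ?N = "m + n"
  let ?M = "A_alpha \<alpha> ?N (complete_split m n)"
  have nn: "n' = ?N" by (rule spec_transfer(1)[OF A_carrier A_carrier sp])
  let ?M' = "A_alpha \<alpha> ?N E'"
  have g': "simple_graph ?N E'" using g'0 nn by simp
  have g: "simple_graph ?N (complete_split m n)" by (rule cs_graph)
  have trq: "\<And>cs. tr (lprod ?M' cs) = tr (lprod ?M cs)"
    using spec_transfer(2)[OF A_carrier A_carrier sp] nn by simp
  let ?d' = "\<lambda>i. real (degree ?N E' i)"
  have t1: "tr ?M' = tr ?M" using trq[of "[0]"] by (simp add: lprod0[OF A_carrier])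
  have sd: "(\<Sum>i<?N. ?d' i) = real m * (real ?N - 1) + real n * real m"
    using t1 a1 unfolding tr_A[OF g'] tr_A[OF g] cs_degsum(1)[OF m1] by simp
  have t2: "tr (?M' * ?M') = tr (?M * ?M)" using trq[of "[0,0]"] by (simp add: lprod00[OF A_carrier])
  have sd2: "(\<Sum>i<?N. (?d' i)^2) = real m * (real ?N - 1)^2 + real n * (real m)^2"
  proof -
    have "\<alpha>^2 * (\<Sum>i<?N. (?d' i)^2) = \<alpha>^2 * (real m * (real ?N - 1)^2 + real n * (real m)^2)"
      using t2 unfolding tr_A2[OF g'] tr_A2[OF g] cs_degsum[OF m1] sd by simp
    then show ?thesis using a1 by simp
  qed
  have degle: "\<And>i. i < ?N \<Longrightarrow> ?d' i \<le> real ?N - 1"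
  proof -
    fix i assume i: "i < ?N"
    have "degree ?N E' i \<le> ?N - 1" by (rule deg_le[OF g' i])
    then have "?d' i \<le> real (?N - 1)" by (simp only: of_nat_le_iff)
    also have "real (?N - 1) = real ?N - 1" using m1 by (simp add: of_nat_diff)
    finally show "?d' i \<le> real ?N - 1" .
  qed
  have domI: "\<And>i. i < ?N \<Longrightarrow> ?d' i = real ?N - 1 \<Longrightarrow> i \<in> domv ?N E'"
  proof -
    fix i assume i: "i < ?N" and d: "?d' i = real ?N - 1"
    have "degree ?N E' i = ?N - 1" using d i by (simp add: of_nat_diff)
    then show "i \<in> domv ?N E'" by (rule deg_full_dom[OF g' i])
  qed
  show "graph_iso n' E' (m + n) (complete_split m n)"
    unfolding nn
  proof (cases "n = 1")
    case True
    \<comment> \<open>K_{m+1}: every vertex must be dominating\<close>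
    have s: "(\<Sum>i<?N. ?d' i) = real ?N * (real ?N - 1)" using sd True by (simp add: algebra_simps)
    have all: "\<And>i. i < ?N \<Longrightarrow> ?d' i = real ?N - 1"
      by (rule sum_all_eq[of ?N ?d' "real ?N - 1", OF degle s])
    have sub: "{..<m} \<subseteq> domv ?N E'" using domI all by auto
    show "graph_iso ?N E' ?N (complete_split m n)"
      by (rule FIN[OF g' sub _ sd]) simp
  next
    case False
    then have n2: "n \<ge> 2" using n1 by simp
    interpret cs m n \<alpha> using m1 n2 a1 a2 by unfold_locales
    have Mdef: "?M = M" by (simp add: M_def)
    have l0def: "\<alpha> * real ?N - 1 = l0" by (rule l0_N)
    have l0': "\<alpha> * (real m + real n) - 1 = l0" using l0_N by simp
    have ssM: "specsetup M ?N qs" by unfold_locales (simp_all add: qs_dist annih)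
    \<comment> \<open>annihilation transfers\<close>
    have M'c: "?M' \<in> carrier_mat ?N ?N" by simp
    have sM': "transpose_mat ?M' = ?M'" by (rule A_sym[OF g'])
    let ?L = "lprod ?M' qs"
    have Lc: "?L \<in> carrier_mat ?N ?N" by simp
    have sL: "transpose_mat ?L = ?L" by (rule lprod_transpose[OF M'c sM'])
    have "tr (?L * ?L) = tr (lprod ?M' (qs @ qs))" by (simp add: lprod_append[OF M'c])
    also have "\<dots> = tr (lprod M (qs @ qs))" using trq Mdef by simp
    also have "\<dots> = 0" by (simp add: lprod_append[OF M_carrier] annih tr_zero)
    finally have "?L = 0\<^sub>m ?N ?N" by (rule frob[OF Lc sL])
    then have ssM': "specsetup ?M' ?N qs" by unfold_locales (simp_all add: qs_dist)
    have trqM: "\<And>cs. tr (lprod ?M' cs) = tr (lprod M cs)" using trq Mdef by simp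
    have trP: "\<And>x. tr (proj ?M' qs x) = tr (proj M qs x)"
      by (rule tr_proj_eq[OF M'c M_carrier trqM])
    have l0q: "l0 \<in> set qs" and t1q: "th1 \<in> set qs" and ne: "th1 \<noteq> l0"
      using order by (auto simp: qs_def)
    have trE0: "tr (proj M qs l0) = real m - 1"
    proof -
      have "domv ?N (complete_split m n) = {..<m}" by (rule cs_dom[OF n2])
      then have "0 \<in> domv ?N (complete_split m n)" using m1 by simp
      then have "domv ?N (complete_split m n) \<noteq> {}" by blast
      from TRDproj[OF g a1 a2 this, of qs] ssM l0q
      show ?thesis by (simp add: Mdef l0' cs_dom[OF n2])
    qed
    show "graph_iso ?N E' ?N (complete_split m n)"
    proof (cases "domv ?N E' = {}")
      case False
      have "tr (proj ?M' qs l0) = real (card (domv ?N E')) - 1"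
        using TRDproj[OF g' a1 a2 False ssM'] l0q by (simp add: l0')
      then have "card (domv ?N E') = m" using trP trE0 by simp
      then show ?thesis by (intro FIN[OF g' _ _ sd]) auto
    next
      case nd: True
      show ?thesis
      proof (cases "m = 1")
        case False
        then have m2: "m \<ge> 2" using m1 by simp
        interpret sM: specsetup M ?N qs by (rule ssM)
        interpret sM': specsetup ?M' ?N qs by (rule ssM')
        define E0 where "E0 = proj M qs l0"
        define E1 where "E1 = proj M qs th1"
        define E0' where "E0' = proj ?M' qs l0"
        define E1' where "E1' = proj ?M' qs th1"
        have E0c: "E0 \<in> carrier_mat ?N ?N" and E1c: "E1 \<in> carrier_mat ?N ?N"
          and E0'c: "E0' \<in> carrier_mat ?N ?N" and E1'c: "E1' \<in> carrier_mat ?N ?N"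
          by (simp_all add: E0_def E1_def E0'_def E1'_def)
        \<comment> \<open>the G side: trace of E0 + E1 exceeds 1\<close>
        have sMM: "transpose_mat M = M" unfolding M_def by (rule A_sym[OF g])
        have E1s: "transpose_mat E1 = E1" unfolding E1_def by (rule sM.proj_sym[OF sMM])
        have E1i: "E1 * E1 = E1" unfolding E1_def by (rule sM.proj_idem[OF t1q])
        have E1V: "E1 * V = V" unfolding E1_def by (rule sM.proj_fix[OF t1q _ V_eigen, of "m+n"]) (simp add: V_def)
        have E1nz: "E1 \<noteq> 0\<^sub>m ?N ?N"
        proof
          assume "E1 = 0\<^sub>m ?N ?N"
          then have "V = 0\<^sub>m ?N ?N" using E1V by (simp add: V_def)
          then show False using V_nz by simp
        qed
        have trE1: "tr E1 > 0" by (rule tr_pos[OF E1c E1s E1i E1nz])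
        have trG: "tr E0' + tr E1' > 1"
          using trP[of l0] trP[of th1] trE0 trE1 m2 by (simp add: E0'_def E1'_def E1_def)
        let ?F = "E0' + E1'"
        have Fc: "?F \<in> carrier_mat ?N ?N" using E0'c E1'c by simp
        have E0's: "transpose_mat E0' = E0'" unfolding E0'_def by (rule sM'.proj_sym[OF sM'])
        have E1's: "transpose_mat E1' = E1'" unfolding E1'_def by (rule sM'.proj_sym[OF sM'])
        have E0'i: "E0' * E0' = E0'" unfolding E0'_def by (rule sM'.proj_idem[OF l0q])
        have E1'i: "E1' * E1' = E1'" unfolding E1'_def by (rule sM'.proj_idem[OF t1q])
        have o1: "E0' * E1' = 0\<^sub>m ?N ?N" unfolding E0'_def E1'_def by (rule sM'.proj_orth[OF t1q l0q ne[symmetric]])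
        have o2: "E1' * E0' = 0\<^sub>m ?N ?N" unfolding E0'_def E1'_def by (rule sM'.proj_orth[OF l0q t1q ne])
        have Fi: "?F * ?F = ?F"
        proof -
          have "?F * ?F = E0' * (E0' + E1') + E1' * (E0' + E1')"
            by (rule add_mult_distrib_mat[OF E0'c E1'c Fc])
          also have "\<dots> = (E0' * E0' + E0' * E1') + (E1' * E0' + E1' * E1')"
            by (simp only: mult_add_distrib_mat[OF E0'c E0'c E1'c] mult_add_distrib_mat[OF E1'c E0'c E1'c])
          also have "\<dots> = ?F" unfolding E0'i E1'i o1 o2 using E0'c E1'c by simp
          finally show ?thesis .
        qed
        have Fs: "transpose_mat ?F = ?F" using E0's E1's E0'c E1'c by (simp add: transpose_add)
        have ev0: "?M' * E0' = l0 \<cdot>\<^sub>m E0'" unfolding E0'_def by (rule sM'.proj_eigen[OF l0q])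
        have ev1: "?M' * E1' = th1 \<cdot>\<^sub>m E1'" unfolding E1'_def by (rule sM'.proj_eigen[OF t1q])
        have BF: "(?M' - (\<alpha> * real ?N - 1) \<cdot>\<^sub>m 1\<^sub>m ?N) * ?F = (th1 - l0) \<cdot>\<^sub>m E1'"
        proof (rule eq_matI)
          fix i j assume "i < dim_row ((th1 - l0) \<cdot>\<^sub>m E1')" "j < dim_col ((th1 - l0) \<cdot>\<^sub>m E1')"
          then have i: "i < ?N" and j: "j < ?N" using E1'c by auto
          have "((?M' - (\<alpha> * real ?N - 1) \<cdot>\<^sub>m 1\<^sub>m ?N) * ?F) $$ (i,j) = (?M' * ?F) $$ (i,j) - l0 * ?F $$ (i,j)"
            using i j Fc M'c unfolding l0def
            by (simp add: minus_mult_distrib_mat[of _ ?N ?N _ _ ?N] mult_smult_assoc_mat[of _ ?N ?N _ ?N]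
                left_mult_one_mat[OF Fc] carrier_matD[OF Fc] carrier_matD[OF E1'c] carrier_matD[OF E0'c])
          also have "(?M' * ?F) $$ (i,j) = (?M' * E0') $$ (i,j) + (?M' * E1') $$ (i,j)"
            using i j E0'c E1'c by (simp add: mult_add_distrib_mat[of _ ?N ?N])
          finally show "((?M' - (\<alpha> * real ?N - 1) \<cdot>\<^sub>m 1\<^sub>m ?N) * ?F) $$ (i,j) = ((th1 - l0) \<cdot>\<^sub>m E1') $$ (i,j)"
            using i j E0'c E1'c unfolding ev0 ev1 by (simp add: algebra_simps)
        qed (use E1'c in auto)
        have c0: "th1 - l0 \<ge> 0" using order by simp
        have trF: "tr ?F \<le> 1"
        proof -
          have "(\<Sum>i<?N. ?F $$ (i,i)) \<le> 1"
          proof (rule R1)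
            fix i j assume "i < ?N" "j < ?N" then show "?F $$ (i,j) = ?F $$ (j,i)" by (rule sym_entry[OF Fc Fs])
          next
            fix i k assume i: "i < ?N" and k: "k < ?N"
            show "(\<Sum>j<?N. ?F $$ (i,j) * ?F $$ (j,k)) = ?F $$ (i,k)"
              using mult_entry[OF Fc Fc i k] Fi by simp
          next
            fix y assume fy: "\<And>i. i < ?N \<Longrightarrow> (\<Sum>j<?N. ?F $$ (i,j) * y j) = y i" and sy: "(\<Sum>i<?N. y i) = 0"
            show "\<forall>i<?N. y i = 0"
              by (rule cone_lemma[OF g' a1 a2 nd Fc E1'c E1's E1'i c0 BF fy sy])
          qed
          then show ?thesis using carrier_matD[OF E1'c] by (simp add: tr_def)
        qed
        have "tr ?F = tr E0' + tr E1'" by (rule tr_add[OF E0'c E1'c])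
        then show ?thesis using trF trG by simp
      next
        case True
        \<comment> \<open>the star: degree counting\<close>
        have noiso: "\<And>i. i < ?N \<Longrightarrow> ?d' i \<ge> 1"
        proof (rule ccontr)
          fix i assume i: "i < ?N" and "\<not> ?d' i \<ge> 1"
          then have d0: "degree ?N E' i = 0" by simp
          have iso: "\<And>j. \<not> E' i j"
          proof
            fix j assume e: "E' i j"
            then have "j < ?N" using g' by (auto simp: simple_graph_def)
            then have "j \<in> {j. j < ?N \<and> E' i j}" using e by simp
            then have "card {j. j < ?N \<and> E' i j} > 0" by (metis card_gt_0_iff empty_iff finite_Collect_conjI finite_Collect_less_nat)
            then show False using d0 unfolding degree_def by linarith
          qed
          have "0 \<in> set qs" by (rule isolated_root[OF g' ssM' i iso])
          then show False using qs_pos by fastforce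
        qed
        have upper: "\<And>i. i < ?N \<Longrightarrow> ?d' i \<le> real n - 1"
        proof -
          fix i assume i: "i < ?N"
          have "?d' i \<noteq> real ?N - 1" using domI[OF i] nd by auto
          then show "?d' i \<le> real n - 1" using degle[OF i] True by (simp add: of_nat_diff)
        qed
        have pt: "\<And>i. i < ?N \<Longrightarrow> (?d' i)^2 \<le> real n * ?d' i - (real n - 1)"
        proof -
          fix i assume i: "i < ?N"
          have "(?d' i - 1) * (real n - 1 - ?d' i) \<ge> 0"
            using noiso[OF i] upper[OF i] by (intro mult_nonneg_nonneg) auto
          then show "(?d' i)^2 \<le> real n * ?d' i - (real n - 1)" by (simp add: power2_eq_square algebra_simps)
        qed
        have "(\<Sum>i<?N. (?d' i)^2) \<le> (\<Sum>i<?N. real n * ?d' i - (real n - 1))"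
          by (rule sum_mono) (use pt in simp)
        also have "\<dots> = real n * (\<Sum>i<?N. ?d' i) - real ?N * (real n - 1)"
          by (simp add: sum_subtractf sum_distrib_left)
        finally have "(\<Sum>i<?N. (?d' i)^2) \<le> real n * (\<Sum>i<?N. ?d' i) - real ?N * (real n - 1)" .
        then have "real m * (real ?N - 1)^2 + real n * (real m)^2 \<le> real n * (real m * (real ?N - 1) + real n * real m) - real ?N * (real n - 1)"
          unfolding sd sd2 .
        moreover have "real m = 1" using True by simp
        ultimately have "real n * real n + real n \<le> real n * (2 * real n) - (real n + 1) * (real n - 1)"
          by (simp add: power2_eq_square algebra_simps)
        then have "real n \<le> 1" by (simp add: algebra_simps)
        then show ?thesis using n2 by simp
      qed
    qed
  qed
qed


theorem corollary3p9:
  fixes m n :: nat and \<alpha> :: real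
  assumes "m \<ge> 1" and "n \<ge> 1" and "1/2 < \<alpha>" and "\<alpha> < 1"
  shows "determined_by_A_alpha_spectrum \<alpha> (m + n) (complete_split m n)"
  using main[OF assms] .

end
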